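(* Let $l\ge 3$, let $\mathfrak g=\mathfrak{sl}_{l+1}(\mathbb C)$, and let $$v'_{l,1}=e_{\epsilon_1-\epsilon_{l+1}}e_{\epsilon_2-\epsilon_l}-e_{\epsilon_2-\epsilon_{l+1}}e_{\epsilon_1-\epsilon_l}\in U(\mathfrak g).$$ Let $R$ be the $\mathfrak g$-submodule of $U(\mathfrak g)$ generated by $v'_{l,1}$ under the adjoint action $X_L f=[X,f]$ ($X\in\mathfrak g$, $f\in U(\mathfrak g)$), and let $R_0$ be the zero-weight subspace of $R$ with respect to $\mathfrak h$. Then $$\dim R_0=\frac{(l-2)(l+1)}{2}.$$
   Context: $\mathfrak g=\mathfrak{sl}_{l+1}(\mathbb C)$ with Cartan subalgebra $\mathfrak h$ of traceless diagonal matrices; roots $\epsilon_i-\epsilon_j$ ($i\ne j$), simple roots $\alpha_i=\epsilon_i-\epsilon_{i+1}$. For $i<j$ the root vectors are $e_{\epsilon_i-\epsilon_j}=(-1)^{j-i-1}E_{ij}$, $f_{\epsilon_i-\epsilon_j}=(-1)^{j-i-1}E_{ji}$ ($E_{ij}$ matrix units), with coroots $h_{\epsilon_i-\epsilon_j}=E_{ii}-E_{jj}$. *)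

theory Defs
  imports Complex_Main
begin

text \<open>Matrices of size n (indices 1..n, paper convention) as functions nat => nat => complex,
  zero outside {1..n}.\<close>
type_synonym cmat = "nat \<Rightarrow> nat \<Rightarrow> complex"

definition unitm :: "nat \<Rightarrow> nat \<Rightarrow> cmat" where
  "unitm i j = (\<lambda>a b. if a = i \<and> b = j then 1 else 0)"

definition mmul :: "nat \<Rightarrow> cmat \<Rightarrow> cmat \<Rightarrow> cmat" where
  "mmul n A B = (\<lambda>i j. \<Sum>k\<in>{1..n}. A i k * B k j)"

definition mbr :: "nat \<Rightarrow> cmat \<Rightarrow> cmat \<Rightarrow> cmat" where
  "mbr n A B = (\<lambda>i j. mmul n A B i j - mmul n B A i j)"

definition sl :: "nat \<Rightarrow> cmat set" where
  "sl n = {A. (\<forall>i j. A i j \<noteq> 0 \<longrightarrow> i \<in> {1..n} \<and> j \<in> {1..n}) \<and> (\<Sum>i\<in>{1..n}. A i i) = 0}"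

definition cartan :: "nat \<Rightarrow> cmat set" where
  "cartan n = {A \<in> sl n. \<forall>i j. i \<noteq> j \<longrightarrow> A i j = 0}"

definition root_e :: "nat \<Rightarrow> nat \<Rightarrow> cmat" where
  "root_e i j = (\<lambda>a b. (-1) ^ (j - i - 1) * unitm i j a b)"

text \<open>Free associative algebra over C on the letters sl n: finitely supported functions on words.\<close>
type_synonym fa = "cmat list \<Rightarrow> complex"

definition fa_carrier :: "nat \<Rightarrow> fa set" where
  "fa_carrier n = {f. finite {w. f w \<noteq> 0} \<and> (\<forall>w. f w \<noteq> 0 \<longrightarrow> set w \<subseteq> sl n)}"

definition fa_mult :: "fa \<Rightarrow> fa \<Rightarrow> fa" where
  "fa_mult f g = (\<lambda>w. \<Sum>i\<le>length w. f (take i w) * g (drop i w))"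

definition fa_gen :: "cmat \<Rightarrow> fa" where
  "fa_gen A = (\<lambda>w. if w = [A] then 1 else 0)"

definition lin_rel :: "cmat \<Rightarrow> cmat \<Rightarrow> complex \<Rightarrow> complex \<Rightarrow> fa" where
  "lin_rel A B c d = (\<lambda>w. fa_gen (\<lambda>a b. c * A a b + d * B a b) w - c * fa_gen A w - d * fa_gen B w)"

definition br_rel :: "nat \<Rightarrow> cmat \<Rightarrow> cmat \<Rightarrow> fa" where
  "br_rel n A B = (\<lambda>w. fa_mult (fa_gen A) (fa_gen B) w - fa_mult (fa_gen B) (fa_gen A) w
                        - fa_gen (mbr n A B) w)"

text \<open>The two-sided ideal defining U(sl_n) = F / U_ideal n.\<close>
inductive_set U_ideal :: "nat \<Rightarrow> fa set" for n where
  rel_lin: "A \<in> sl n \<Longrightarrow> B \<in> sl n \<Longrightarrow> lin_rel A B c d \<in> U_ideal n"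
| rel_br: "A \<in> sl n \<Longrightarrow> B \<in> sl n \<Longrightarrow> br_rel n A B \<in> U_ideal n"
| zero: "(\<lambda>_. 0) \<in> U_ideal n"
| add: "f \<in> U_ideal n \<Longrightarrow> g \<in> U_ideal n \<Longrightarrow> (\<lambda>w. f w + g w) \<in> U_ideal n"
| smult: "f \<in> U_ideal n \<Longrightarrow> (\<lambda>w. c * f w) \<in> U_ideal n"
| lmult: "f \<in> U_ideal n \<Longrightarrow> g \<in> fa_carrier n \<Longrightarrow> fa_mult g f \<in> U_ideal n"
| rmult: "f \<in> U_ideal n \<Longrightarrow> g \<in> fa_carrier n \<Longrightarrow> fa_mult f g \<in> U_ideal n"

definition ad :: "cmat \<Rightarrow> fa \<Rightarrow> fa" where
  "ad X f = (\<lambda>w. fa_mult (fa_gen X) f w - fa_mult f (fa_gen X) w)"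

text \<open>Preimage in F of the g-submodule of U(g) generated by the class of v.\<close>
inductive_set R_pre :: "nat \<Rightarrow> fa \<Rightarrow> fa set" for n v where
  base: "v \<in> R_pre n v"
| ideal: "f \<in> U_ideal n \<Longrightarrow> f \<in> R_pre n v"
| add: "f \<in> R_pre n v \<Longrightarrow> g \<in> R_pre n v \<Longrightarrow> (\<lambda>w. f w + g w) \<in> R_pre n v"
| smult: "f \<in> R_pre n v \<Longrightarrow> (\<lambda>w. c * f w) \<in> R_pre n v"
| adj: "X \<in> sl n \<Longrightarrow> f \<in> R_pre n v \<Longrightarrow> ad X f \<in> R_pre n v"

text \<open>Preimage of the zero-weight subspace R_0 (elements killed by ad h for all h in the Cartan).\<close>
definition R0_pre :: "nat \<Rightarrow> fa \<Rightarrow> fa set" where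
  "R0_pre n v = {f \<in> R_pre n v. \<forall>H \<in> cartan n. ad H f \<in> U_ideal n}"

text \<open>V / I (with I contained in V) has dimension k over C: a basis of cardinality k modulo I.\<close>
definition quot_dim :: "fa set \<Rightarrow> fa set \<Rightarrow> nat \<Rightarrow> bool" where
  "quot_dim I V k \<longleftrightarrow> (\<exists>B. finite B \<and> card B = k \<and> B \<subseteq> V
      \<and> (\<forall>c. (\<lambda>w. \<Sum>b\<in>B. c b * b w) \<in> I \<longrightarrow> (\<forall>b\<in>B. c b = 0))
      \<and> (\<forall>f\<in>V. \<exists>c. (\<lambda>w. f w - (\<Sum>b\<in>B. c b * b w)) \<in> I))"

definition vprime :: "nat \<Rightarrow> fa" where
  "vprime l = (\<lambda>w. fa_mult (fa_gen (root_e 1 (l+1))) (fa_gen (root_e 2 l)) w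
                 - fa_mult (fa_gen (root_e 2 (l+1))) (fa_gen (root_e 1 l)) w)"

end

theory Submission
  imports Defs
begin


section \<open>Free algebra basics\<close>

definition gw :: "cmat list \<Rightarrow> fa" where
  "gw ws = (\<lambda>w. if w = ws then 1 else 0)"

lemma fa_gen_gw: "fa_gen A = gw [A]"
  by (simp add: fa_gen_def gw_def)

lemma take_drop_eq_iff:
  assumes "i \<le> length w"
  shows "(take i w = u \<and> drop i w = v) \<longleftrightarrow> (i = length u \<and> w = u @ v)"
  using assms by (metis append_take_drop_id append_eq_conv_conj length_take min.absorb2)

lemma fa_mult_gw: "fa_mult (gw u) (gw v) = gw (u @ v)"
proof
  fix w
  have "fa_mult (gw u) (gw v) w = (\<Sum>i\<le>length w. if i = length u \<and> w = u @ v then 1 else 0)"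
    unfolding fa_mult_def gw_def
    by (intro sum.cong refl) (auto simp: take_drop_eq_iff)
  also have "\<dots> = gw (u @ v) w"
    by (cases "w = u @ v") (auto simp: gw_def)
  finally show "fa_mult (gw u) (gw v) w = gw (u @ v) w" .
qed

lemma fa_mult_add_left: "fa_mult (\<lambda>w. f w + g w) h = (\<lambda>w. fa_mult f h w + fa_mult g h w)"
  by (simp add: fa_mult_def distrib_right sum.distrib)
lemma fa_mult_add_right: "fa_mult h (\<lambda>w. f w + g w) = (\<lambda>w. fa_mult h f w + fa_mult h g w)"
  by (simp add: fa_mult_def distrib_left sum.distrib)
lemma fa_mult_diff_left: "fa_mult (\<lambda>w. f w - g w) h = (\<lambda>w. fa_mult f h w - fa_mult g h w)"
  by (simp add: fa_mult_def left_diff_distrib sum_subtractf)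
lemma fa_mult_diff_right: "fa_mult h (\<lambda>w. f w - g w) = (\<lambda>w. fa_mult h f w - fa_mult h g w)"
  by (simp add: fa_mult_def right_diff_distrib sum_subtractf)
lemma fa_mult_smult_left: "fa_mult (\<lambda>w. c * f w) h = (\<lambda>w. c * fa_mult f h w)"
  by (simp add: fa_mult_def sum_distrib_left mult.assoc)
lemma fa_mult_smult_right: "fa_mult h (\<lambda>w. c * f w) = (\<lambda>w. c * fa_mult h f w)"
  by (simp add: fa_mult_def sum_distrib_left mult.left_commute)
lemma fa_mult_sum_left: "fa_mult (\<lambda>w. \<Sum>s\<in>S. F s w) h = (\<lambda>w. \<Sum>s\<in>S. fa_mult (F s) h w)"
  by (auto simp: fa_mult_def sum_distrib_right intro!: ext sum.swap)
lemma fa_mult_sum_right: "fa_mult h (\<lambda>w. \<Sum>s\<in>S. F s w) = (\<lambda>w. \<Sum>s\<in>S. fa_mult h (F s) w)"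
  by (auto simp: fa_mult_def sum_distrib_left intro!: ext sum.swap)

lemma I_diff: "f \<in> U_ideal n \<Longrightarrow> g \<in> U_ideal n \<Longrightarrow> (\<lambda>w. f w - g w) \<in> U_ideal n"
proof -
  assume f: "f \<in> U_ideal n" and g: "g \<in> U_ideal n"
  have "(\<lambda>w. (-1) * g w) \<in> U_ideal n" using g by (rule U_ideal.smult)
  from U_ideal.add[OF f this] show ?thesis by simp
qed

lemma I_cong: "f \<in> U_ideal n \<Longrightarrow> f = g \<Longrightarrow> g \<in> U_ideal n" by simp

lemma I_zero': "(\<lambda>w. 0) \<in> U_ideal n" by (rule U_ideal.zero)

lemma I_sum: "finite S \<Longrightarrow> (\<And>s. s \<in> S \<Longrightarrow> F s \<in> U_ideal n) \<Longrightarrow> (\<lambda>w. \<Sum>s\<in>S. c s * F s w) \<in> U_ideal n"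
proof (induction S rule: finite_induct)
  case empty then show ?case by (simp add: U_ideal.zero)
next
  case (insert x S)
  have a: "(\<lambda>w. c x * F x w) \<in> U_ideal n" using insert by (auto intro: U_ideal.smult)
  have b: "(\<lambda>w. \<Sum>s\<in>S. c s * F s w) \<in> U_ideal n" using insert by auto
  show ?case using U_ideal.add[OF a b] insert by simp
qed

definition eqv :: "nat \<Rightarrow> fa \<Rightarrow> fa \<Rightarrow> bool" where
  "eqv n f g \<longleftrightarrow> (\<lambda>w. f w - g w) \<in> U_ideal n"

lemma eqv_refl: "eqv n f f" by (simp add: eqv_def U_ideal.zero)
lemma eqv_sym: "eqv n f g \<Longrightarrow> eqv n g f"
  unfolding eqv_def by (drule U_ideal.smult[where c="-1"]) simp
lemma eqv_trans: "eqv n f g \<Longrightarrow> eqv n g h \<Longrightarrow> eqv n f h"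
  unfolding eqv_def by (drule (1) U_ideal.add) simp
lemma eqv_add: "eqv n f g \<Longrightarrow> eqv n f' g' \<Longrightarrow> eqv n (\<lambda>w. f w + f' w) (\<lambda>w. g w + g' w)"
  unfolding eqv_def by (drule (1) U_ideal.add) (simp add: algebra_simps)
lemma eqv_diff: "eqv n f g \<Longrightarrow> eqv n f' g' \<Longrightarrow> eqv n (\<lambda>w. f w - f' w) (\<lambda>w. g w - g' w)"
  unfolding eqv_def by (drule (1) I_diff) (simp add: algebra_simps)
lemma eqv_smult: "eqv n f g \<Longrightarrow> eqv n (\<lambda>w. c * f w) (\<lambda>w. c * g w)"
  unfolding eqv_def by (drule U_ideal.smult[where c=c]) (simp add: algebra_simps)
lemma eqv_sum: "finite S \<Longrightarrow> (\<And>s. s \<in> S \<Longrightarrow> eqv n (F s) (G s)) \<Longrightarrow>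
   eqv n (\<lambda>w. \<Sum>s\<in>S. c s * F s w) (\<lambda>w. \<Sum>s\<in>S. c s * G s w)"
  unfolding eqv_def by (drule I_sum[where c=c and F="\<lambda>s w. F s w - G s w"])
     (auto simp: algebra_simps sum_subtractf)
lemma eqv_sum': "finite S \<Longrightarrow> (\<And>s. s \<in> S \<Longrightarrow> eqv n (F s) (G s)) \<Longrightarrow>
   eqv n (\<lambda>w. \<Sum>s\<in>S. F s w) (\<lambda>w. \<Sum>s\<in>S. G s w)"
  using eqv_sum[of S n F G "\<lambda>_. 1"] by simp
lemma eqv_ideal: "eqv n f g \<Longrightarrow> g \<in> U_ideal n \<Longrightarrow> f \<in> U_ideal n"
  unfolding eqv_def by (drule (1) U_ideal.add) simp
lemma eqv_eq: "f = g \<Longrightarrow> eqv n f g" by (simp add: eqv_refl)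
lemma eqv_0: "f \<in> U_ideal n \<Longrightarrow> eqv n f (\<lambda>w. 0)" by (simp add: eqv_def)

lemma gw_carrier: "set ws \<subseteq> sl n \<Longrightarrow> gw ws \<in> fa_carrier n"
  by (auto simp: fa_carrier_def gw_def)

lemma eqv_mult_right: "eqv n f g \<Longrightarrow> h \<in> fa_carrier n \<Longrightarrow> eqv n (fa_mult f h) (fa_mult g h)"
  unfolding eqv_def by (drule (1) U_ideal.rmult) (simp add: fa_mult_diff_left)
lemma eqv_mult_left: "eqv n f g \<Longrightarrow> h \<in> fa_carrier n \<Longrightarrow> eqv n (fa_mult h f) (fa_mult h g)"
  unfolding eqv_def by (drule (1) U_ideal.lmult) (simp add: fa_mult_diff_right)


lemma mult_if0_right[simp]: "x * (if P then y else 0) = (if P then x * y else (0::complex))" by simp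
lemma mult_if0_left[simp]: "(if P then y else 0) * x = (if P then y * x else (0::complex))" by simp

lemma sl_supp: "X \<in> sl n \<Longrightarrow> X a b \<noteq> 0 \<Longrightarrow> a \<in> {1..n} \<and> b \<in> {1..n}"
  by (auto simp: sl_def)
lemma sl_supp1: "X \<in> sl n \<Longrightarrow> a \<notin> {1..n} \<Longrightarrow> X a b = 0"
  using sl_supp by blast
lemma sl_supp2: "X \<in> sl n \<Longrightarrow> b \<notin> {1..n} \<Longrightarrow> X a b = 0"
  using sl_supp by blast

lemma sl_lin: "A \<in> sl n \<Longrightarrow> B \<in> sl n \<Longrightarrow> (\<lambda>a b. c * A a b + d * B a b) \<in> sl n"
proof -
  assume A: "A \<in> sl n" and B: "B \<in> sl n"
  have "(\<Sum>i\<in>{1..n}. c * A i i + d * B i i) = c * (\<Sum>i\<in>{1..n}. A i i) + d * (\<Sum>i\<in>{1..n}. B i i)"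
    by (simp add: sum.distrib sum_distrib_left)
  also have "\<dots> = 0" using A B by (simp add: sl_def)
  finally have tr: "(\<Sum>i\<in>{1..n}. c * A i i + d * B i i) = 0" .
  have "\<forall>i j. c * A i j + d * B i j \<noteq> 0 \<longrightarrow> i \<in> {1..n} \<and> j \<in> {1..n}"
  proof (intro allI impI)
    fix i j assume h: "c * A i j + d * B i j \<noteq> 0"
    show "i \<in> {1..n} \<and> j \<in> {1..n}"
    proof (rule ccontr)
      assume "\<not> (i \<in> {1..n} \<and> j \<in> {1..n})"
      then have "A i j = 0" "B i j = 0" using sl_supp[OF A] sl_supp[OF B] by blast+
      then show False using h by simp
    qed
  qed
  then show ?thesis using tr by (simp add: sl_def)
qed

lemma sl_zero: "(\<lambda>a b. 0) \<in> sl n" by (simp add: sl_def)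

lemma sl_sum: "finite S \<Longrightarrow> (\<And>s. s \<in> S \<Longrightarrow> M s \<in> sl n) \<Longrightarrow> (\<lambda>a b. \<Sum>s\<in>S. c s * M s a b) \<in> sl n"
proof (induction S rule: finite_induct)
  case empty then show ?case by (simp add: sl_zero)
next
  case (insert x S)
  have "(\<lambda>a b. c x * M x a b + 1 * (\<Sum>s\<in>S. c s * M s a b)) \<in> sl n"
    using insert by (intro sl_lin) auto
  then show ?case using insert by simp
qed

lemma gen_lin: "A \<in> sl n \<Longrightarrow> B \<in> sl n \<Longrightarrow>
   eqv n (fa_gen (\<lambda>a b. c * A a b + d * B a b)) (\<lambda>w. c * fa_gen A w + d * fa_gen B w)"
  unfolding eqv_def
  by (drule (1) U_ideal.rel_lin[where c=c and d=d]) (simp add: lin_rel_def algebra_simps)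

lemma gen_zero: "eqv n (fa_gen (\<lambda>a b. 0)) (\<lambda>w. 0)"
  using gen_lin[OF sl_zero sl_zero, of n 0 0] by simp

lemma gen_smult: "A \<in> sl n \<Longrightarrow> eqv n (fa_gen (\<lambda>a b. c * A a b)) (\<lambda>w. c * fa_gen A w)"
  using gen_lin[of A n A c 0] by simp

lemma gen_sum: "finite S \<Longrightarrow> (\<And>s. s \<in> S \<Longrightarrow> M s \<in> sl n) \<Longrightarrow>
   eqv n (fa_gen (\<lambda>a b. \<Sum>s\<in>S. c s * M s a b)) (\<lambda>w. \<Sum>s\<in>S. c s * fa_gen (M s) w)"
proof (induction S rule: finite_induct)
  case empty then show ?case by (simp add: gen_zero)
next
  case (insert x S)
  have sS: "(\<lambda>a b. \<Sum>s\<in>S. c s * M s a b) \<in> sl n" using insert by (intro sl_sum) auto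
  have "eqv n (fa_gen (\<lambda>a b. c x * M x a b + 1 * (\<Sum>s\<in>S. c s * M s a b)))
          (\<lambda>w. c x * fa_gen (M x) w + 1 * fa_gen (\<lambda>a b. \<Sum>s\<in>S. c s * M s a b) w)"
    using insert sS by (intro gen_lin) auto
  also have "eqv n \<dots> (\<lambda>w. c x * fa_gen (M x) w + (\<Sum>s\<in>S. c s * fa_gen (M s) w))"
    using insert by (simp add: eqv_add eqv_refl)
  finally (eqv_trans) show ?case using insert by simp
qed

section \<open>The shifted matrix units eh\<close>

definition idm :: "nat \<Rightarrow> cmat" where
  "idm n = (\<lambda>a b. if a = b \<and> a \<in> {1..n} then 1 else 0)"

definition ehc :: "nat \<Rightarrow> nat \<Rightarrow> nat \<Rightarrow> complex" where
  "ehc n i j = (if i = j then 1 / of_nat n else 0)"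

definition eh :: "nat \<Rightarrow> nat \<Rightarrow> nat \<Rightarrow> cmat" where
  "eh n i j = (\<lambda>a b. unitm i j a b - ehc n i j * idm n a b)"

lemma unitm_alt: "unitm i j a b = (if a = i then if b = j then 1 else 0 else 0)"
  by (simp add: unitm_def)
lemma idm_alt: "idm n a b = (if a = b then if a \<in> {1..n} then 1 else 0 else 0)"
  by (simp add: idm_def)

lemma unitm_diag0: "i \<noteq> j \<Longrightarrow> unitm i j a a = 0"
  by (auto simp: unitm_def)

lemma unitm_sl: "i \<in> {1..n} \<Longrightarrow> j \<in> {1..n} \<Longrightarrow> i \<noteq> j \<Longrightarrow> unitm i j \<in> sl n"
  by (auto simp: sl_def unitm_diag0) (auto simp: unitm_def split: if_splits)

lemma eh_offdiag: "i \<noteq> j \<Longrightarrow> eh n i j = unitm i j"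
  by (simp add: eh_def ehc_def)

lemma eh_sl: "n \<ge> 1 \<Longrightarrow> i \<in> {1..n} \<Longrightarrow> j \<in> {1..n} \<Longrightarrow> eh n i j \<in> sl n"
proof (cases "i = j")
  case False
  assume "n \<ge> 1" "i \<in> {1..n}" "j \<in> {1..n}"
  then show ?thesis using False by (simp add: eh_offdiag unitm_sl)
next
  case True
  assume n: "n \<ge> 1" and i: "i \<in> {1..n}" and j: "j \<in> {1..n}"
  have "(\<Sum>a\<in>{1..n}. eh n i j a a) = (\<Sum>a\<in>{1..n}. unitm i i a a) - (\<Sum>a\<in>{1..n}. 1 / of_nat n)"
    unfolding eh_def idm_def ehc_def using True by (simp add: sum_subtractf)
  also have "(\<Sum>a\<in>{1..n}. unitm i i a a) = 1"
    using i by (simp add: unitm_alt sum.delta)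
  also have "(\<Sum>a\<in>{1..n}. 1 / of_nat n :: complex) = 1"
    using n by simp
  finally have "(\<Sum>a\<in>{1..n}. eh n i j a a) = 0" by simp
  then show ?thesis using i j by (auto simp: sl_def eh_def unitm_def idm_def)
qed

lemma mmul_l_unitm: "i \<in> {1..n} \<Longrightarrow> (\<Sum>k\<in>{1..n}. X a k * unitm i j k b) = (if b = j then X a i else 0)"
  by (simp add: unitm_alt sum.delta' cong: if_cong)
lemma mmul_r_unitm: "j \<in> {1..n} \<Longrightarrow> (\<Sum>k\<in>{1..n}. unitm i j a k * X k b) = (if a = i then X j b else 0)"
  by (simp add: unitm_alt sum.delta cong: if_cong)
lemma mmul_l_idm: "X \<in> sl n \<Longrightarrow> (\<Sum>k\<in>{1..n}. X a k * idm n k b) = X a b"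
  by (auto simp: idm_alt sum.delta' sl_supp2 cong: if_cong)
lemma mmul_r_idm: "X \<in> sl n \<Longrightarrow> (\<Sum>k\<in>{1..n}. idm n a k * X k b) = X a b"
  by (auto simp: idm_alt sum.delta sl_supp1 cong: if_cong)

lemma mbr_eh:
  assumes X: "X \<in> sl n" and i: "i \<in> {1..n}" and j: "j \<in> {1..n}"
  shows "mbr n X (eh n i j) = (\<lambda>a b. (\<Sum>s\<in>{1..n}. X s i * eh n s j a b) - (\<Sum>s\<in>{1..n}. X j s * eh n i s a b))"
proof (intro ext)
  fix a b
  have l1: "(\<Sum>k\<in>{1..n}. X a k * eh n i j k b) = (\<Sum>k\<in>{1..n}. X a k * unitm i j k b) - ehc n i j * (\<Sum>k\<in>{1..n}. X a k * idm n k b)"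
    unfolding eh_def by (simp add: right_diff_distrib sum_subtractf sum_distrib_left mult.left_commute)
  have l2: "(\<Sum>k\<in>{1..n}. eh n i j a k * X k b) = (\<Sum>k\<in>{1..n}. unitm i j a k * X k b) - ehc n i j * (\<Sum>k\<in>{1..n}. idm n a k * X k b)"
    unfolding eh_def by (simp add: left_diff_distrib sum_subtractf sum_distrib_left mult.assoc)
  have r1: "(\<Sum>s\<in>{1..n}. X s i * eh n s j a b) = (if b = j then X a i else 0) - X j i * ehc n j j * idm n a b"
  proof -
    have "(\<Sum>s\<in>{1..n}. X s i * eh n s j a b) = (\<Sum>s\<in>{1..n}. X s i * unitm s j a b) - (\<Sum>s\<in>{1..n}. X s i * ehc n s j * idm n a b)"
      unfolding eh_def by (simp add: right_diff_distrib sum_subtractf mult.assoc)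
    also have "(\<Sum>s\<in>{1..n}. X s i * unitm s j a b) = (if b = j then X a i else 0)"
      using X by (auto simp: unitm_alt sum.delta' sl_supp1 cong: if_cong)
    also have "(\<Sum>s\<in>{1..n}. X s i * ehc n s j * idm n a b) = X j i * ehc n j j * idm n a b"
      using j by (simp add: ehc_def sum.delta' cong: if_cong)
    finally show ?thesis .
  qed
  have r2: "(\<Sum>s\<in>{1..n}. X j s * eh n i s a b) = (if a = i then X j b else 0) - X j i * ehc n i i * idm n a b"
  proof -
    have "(\<Sum>s\<in>{1..n}. X j s * eh n i s a b) = (\<Sum>s\<in>{1..n}. X j s * unitm i s a b) - (\<Sum>s\<in>{1..n}. X j s * ehc n i s * idm n a b)"
      unfolding eh_def by (simp add: right_diff_distrib sum_subtractf mult.assoc)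
    also have "(\<Sum>s\<in>{1..n}. X j s * unitm i s a b) = (if a = i then X j b else 0)"
      using X by (auto simp: unitm_alt sum.delta' sl_supp2 cong: if_cong)
    also have "(\<Sum>s\<in>{1..n}. X j s * ehc n i s * idm n a b) = X j i * ehc n i i * idm n a b"
      using i by (simp add: ehc_def sum.delta cong: if_cong)
    finally show ?thesis .
  qed
  show "mbr n X (eh n i j) a b = (\<Sum>s\<in>{1..n}. X s i * eh n s j a b) - (\<Sum>s\<in>{1..n}. X j s * eh n i s a b)"
    unfolding mbr_def mmul_def l1 l2 r1 r2 mmul_l_unitm[OF i] mmul_r_unitm[OF j] mmul_l_idm[OF X] mmul_r_idm[OF X]
    by (simp add: ehc_def)
qed


section \<open>Adjoint action\<close>

lemma ad_gw2: "ad X (gw [A,B]) = (\<lambda>w. fa_mult (\<lambda>w. gw [X,A] w - gw [A,X] w) (gw [B]) w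
   + fa_mult (gw [A]) (\<lambda>w. gw [X,B] w - gw [B,X] w) w)"
  unfolding ad_def fa_gen_gw fa_mult_diff_left fa_mult_diff_right fa_mult_gw
  by (rule ext) simp

lemma br_eqv: "A \<in> sl n \<Longrightarrow> B \<in> sl n \<Longrightarrow> eqv n (\<lambda>w. gw [A,B] w - gw [B,A] w) (fa_gen (mbr n A B))"
  unfolding eqv_def
  by (drule (1) U_ideal.rel_br) (simp add: br_rel_def fa_gen_gw fa_mult_gw)

lemma fa_gen_carrier: "A \<in> sl n \<Longrightarrow> fa_gen A \<in> fa_carrier n"
  unfolding fa_gen_gw by (rule gw_carrier) simp

lemma ad_gw2_eqv:
  assumes "X \<in> sl n" "A \<in> sl n" "B \<in> sl n"
  shows "eqv n (ad X (gw [A,B])) (\<lambda>w. gw [mbr n X A, B] w + gw [A, mbr n X B] w)"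
proof -
  have 1: "eqv n (fa_mult (\<lambda>w. gw [X,A] w - gw [A,X] w) (gw [B])) (fa_mult (fa_gen (mbr n X A)) (gw [B]))"
    using assms by (intro eqv_mult_right br_eqv gw_carrier) auto
  have 2: "eqv n (fa_mult (gw [A]) (\<lambda>w. gw [X,B] w - gw [B,X] w)) (fa_mult (gw [A]) (fa_gen (mbr n X B)))"
    using assms by (intro eqv_mult_left br_eqv gw_carrier) auto
  show ?thesis unfolding ad_gw2 using eqv_add[OF 1 2] by (simp add: fa_gen_gw fa_mult_gw)
qed

lemma ad_sum: "ad X (\<lambda>w. \<Sum>s\<in>S. c s * F s w) = (\<lambda>w. \<Sum>s\<in>S. c s * ad X (F s) w)"
  unfolding ad_def fa_mult_sum_left fa_mult_sum_right fa_mult_smult_left fa_mult_smult_right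
  by (simp add: sum_subtractf right_diff_distrib)

lemma ad_diff: "ad X (\<lambda>w. f w - g w) = (\<lambda>w. ad X f w - ad X g w)"
  unfolding ad_def fa_mult_diff_left fa_mult_diff_right by (rule ext) simp

lemma ad_add: "ad X (\<lambda>w. f w + g w) = (\<lambda>w. ad X f w + ad X g w)"
  unfolding ad_def fa_mult_add_left fa_mult_add_right by (rule ext) simp

lemma ad_smult: "ad X (\<lambda>w. c * f w) = (\<lambda>w. c * ad X f w)"
  unfolding ad_def fa_mult_smult_left fa_mult_smult_right by (rule ext) (simp add: algebra_simps)

lemma ad_ideal: "X \<in> sl n \<Longrightarrow> f \<in> U_ideal n \<Longrightarrow> ad X f \<in> U_ideal n"
  unfolding ad_def by (intro I_diff U_ideal.lmult U_ideal.rmult fa_gen_carrier)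

lemma ad_eqv: "X \<in> sl n \<Longrightarrow> eqv n f g \<Longrightarrow> eqv n (ad X f) (ad X g)"
  unfolding eqv_def by (drule (1) ad_ideal) (simp add: ad_diff)

lemma gen_sumdiff:
  assumes "finite S" "\<And>s. s \<in> S \<Longrightarrow> M s \<in> sl n" "\<And>s. s \<in> S \<Longrightarrow> N s \<in> sl n"
  shows "eqv n (fa_gen (\<lambda>a b. (\<Sum>s\<in>S. c s * M s a b) - (\<Sum>s\<in>S. d s * N s a b)))
     (\<lambda>w. \<Sum>s\<in>S. (c s * fa_gen (M s) w - d s * fa_gen (N s) w))"
proof -
  have sM: "(\<lambda>a b. \<Sum>s\<in>S. c s * M s a b) \<in> sl n" using assms by (intro sl_sum) auto
  have sN: "(\<lambda>a b. \<Sum>s\<in>S. d s * N s a b) \<in> sl n" using assms by (intro sl_sum) auto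
  have "eqv n (fa_gen (\<lambda>a b. 1 * (\<Sum>s\<in>S. c s * M s a b) + (-1) * (\<Sum>s\<in>S. d s * N s a b)))
     (\<lambda>w. 1 * fa_gen (\<lambda>a b. \<Sum>s\<in>S. c s * M s a b) w + (-1) * fa_gen (\<lambda>a b. \<Sum>s\<in>S. d s * N s a b) w)"
    by (rule gen_lin[OF sM sN])
  also have "eqv n \<dots> (\<lambda>w. 1 * (\<Sum>s\<in>S. c s * fa_gen (M s) w) + (-1) * (\<Sum>s\<in>S. d s * fa_gen (N s) w))"
    by (intro eqv_add eqv_smult gen_sum assms) auto
  finally (eqv_trans) show ?thesis by (simp add: sum_subtractf)
qed

lemma fa_mult_sumdiff_gw_left:
  "fa_mult (\<lambda>w. \<Sum>s\<in>S. (c s * fa_gen (M s) w - d s * fa_gen (N s) w)) (gw [B])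
   = (\<lambda>w. \<Sum>s\<in>S. (c s * gw [M s, B] w - d s * gw [N s, B] w))"
  unfolding fa_mult_sum_left fa_mult_diff_left fa_mult_smult_left fa_gen_gw fa_mult_gw by simp

lemma fa_mult_sumdiff_gw_right:
  "fa_mult (gw [A]) (\<lambda>w. \<Sum>s\<in>S. (c s * fa_gen (M s) w - d s * fa_gen (N s) w))
   = (\<lambda>w. \<Sum>s\<in>S. (c s * gw [A, M s] w - d s * gw [A, N s] w))"
  unfolding fa_mult_sum_right fa_mult_diff_right fa_mult_smult_right fa_gen_gw fa_mult_gw by simp

lemma ad_eh2:
  assumes n: "n \<ge> 1" and X: "X \<in> sl n" and ij: "i \<in> {1..n}" "j \<in> {1..n}" and km: "k \<in> {1..n}" "m \<in> {1..n}"
  shows "eqv n (ad X (gw [eh n i j, eh n k m]))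
    (\<lambda>w. \<Sum>s\<in>{1..n}. (X s i * gw [eh n s j, eh n k m] w - X j s * gw [eh n i s, eh n k m] w
         + (X s k * gw [eh n i j, eh n s m] w - X m s * gw [eh n i j, eh n k s] w)))"
proof -
  have e: "\<And>a b. a \<in> {1..n} \<Longrightarrow> b \<in> {1..n} \<Longrightarrow> eh n a b \<in> sl n" using n by (rule eh_sl)
  have 1: "eqv n (gw [mbr n X (eh n i j), eh n k m])
     (\<lambda>w. \<Sum>s\<in>{1..n}. (X s i * gw [eh n s j, eh n k m] w - X j s * gw [eh n i s, eh n k m] w))"
  proof -
    have "eqv n (fa_mult (fa_gen (mbr n X (eh n i j))) (gw [eh n k m]))
       (fa_mult (\<lambda>w. \<Sum>s\<in>{1..n}. (X s i * fa_gen (eh n s j) w - X j s * fa_gen (eh n i s) w)) (gw [eh n k m]))"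
      unfolding mbr_eh[OF X ij]
      using ij km by (intro eqv_mult_right gen_sumdiff gw_carrier) (auto intro: e)
    then show ?thesis unfolding fa_mult_sumdiff_gw_left by (simp add: fa_gen_gw fa_mult_gw)
  qed
  have 2: "eqv n (gw [eh n i j, mbr n X (eh n k m)])
     (\<lambda>w. \<Sum>s\<in>{1..n}. (X s k * gw [eh n i j, eh n s m] w - X m s * gw [eh n i j, eh n k s] w))"
  proof -
    have "eqv n (fa_mult (gw [eh n i j]) (fa_gen (mbr n X (eh n k m))))
       (fa_mult (gw [eh n i j]) (\<lambda>w. \<Sum>s\<in>{1..n}. (X s k * fa_gen (eh n s m) w - X m s * fa_gen (eh n k s) w)))"
      unfolding mbr_eh[OF X km]
      using ij km by (intro eqv_mult_left gen_sumdiff gw_carrier) (auto intro: e)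
    then show ?thesis unfolding fa_mult_sumdiff_gw_right by (simp add: fa_gen_gw fa_mult_gw)
  qed
  have "eqv n (ad X (gw [eh n i j, eh n k m])) (\<lambda>w. gw [mbr n X (eh n i j), eh n k m] w + gw [eh n i j, mbr n X (eh n k m)] w)"
    using X ij km by (intro ad_gw2_eqv e) auto
  also have "eqv n \<dots> (\<lambda>w. (\<Sum>s\<in>{1..n}. (X s i * gw [eh n s j, eh n k m] w - X j s * gw [eh n i s, eh n k m] w))
       + (\<Sum>s\<in>{1..n}. (X s k * gw [eh n i j, eh n s m] w - X m s * gw [eh n i j, eh n k s] w)))"
    by (rule eqv_add[OF 1 2])
  finally (eqv_trans) show ?thesis by (simp add: sum.distrib)
qed


lemma sum_swap3: "(\<Sum>a\<in>A. \<Sum>m\<in>M. \<Sum>b\<in>B. F a m b) = (\<Sum>b\<in>B. \<Sum>m\<in>M. \<Sum>a\<in>A. F a m b)"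
proof -
  have "(\<Sum>a\<in>A. \<Sum>m\<in>M. \<Sum>b\<in>B. F a m b) = (\<Sum>a\<in>A. \<Sum>b\<in>B. \<Sum>m\<in>M. F a m b)"
    by (rule sum.cong[OF refl]) (rule sum.swap)
  also have "\<dots> = (\<Sum>b\<in>B. \<Sum>a\<in>A. \<Sum>m\<in>M. F a m b)" by (rule sum.swap)
  also have "\<dots> = (\<Sum>b\<in>B. \<Sum>m\<in>M. \<Sum>a\<in>A. F a m b)"
    by (rule sum.cong[OF refl]) (rule sum.swap)
  finally show ?thesis .
qed

lemma sum_pull2: "(\<Sum>k\<in>K. \<Sum>m\<in>M. \<Sum>b\<in>B. F k m b) = (\<Sum>b\<in>B. \<Sum>k\<in>K. \<Sum>m\<in>M. F k m b)"
proof -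
  have "(\<Sum>k\<in>K. \<Sum>m\<in>M. \<Sum>b\<in>B. F k m b) = (\<Sum>k\<in>K. \<Sum>b\<in>B. \<Sum>m\<in>M. F k m b)"
    by (rule sum.cong[OF refl]) (rule sum.swap)
  also have "\<dots> = (\<Sum>b\<in>B. \<Sum>k\<in>K. \<Sum>m\<in>M. F k m b)" by (rule sum.swap)
  finally show ?thesis .
qed

lemma sum_pull3: "(\<Sum>j\<in>J. \<Sum>k\<in>K. \<Sum>m\<in>M. \<Sum>b\<in>B. F j k m b) = (\<Sum>b\<in>B. \<Sum>j\<in>J. \<Sum>k\<in>K. \<Sum>m\<in>M. F j k m b)"
proof -
  have "(\<Sum>j\<in>J. \<Sum>k\<in>K. \<Sum>m\<in>M. \<Sum>b\<in>B. F j k m b) = (\<Sum>j\<in>J. \<Sum>b\<in>B. \<Sum>k\<in>K. \<Sum>m\<in>M. F j k m b)"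
    by (rule sum.cong[OF refl]) (rule sum_pull2)
  also have "\<dots> = (\<Sum>b\<in>B. \<Sum>j\<in>J. \<Sum>k\<in>K. \<Sum>m\<in>M. F j k m b)" by (rule sum.swap)
  finally show ?thesis .
qed

lemma sum_swap4: "(\<Sum>a\<in>A. \<Sum>k\<in>K. \<Sum>m\<in>M. \<Sum>b\<in>B. F a k m b) = (\<Sum>b\<in>B. \<Sum>k\<in>K. \<Sum>m\<in>M. \<Sum>a\<in>A. F a k m b)"
proof -
  have "(\<Sum>a\<in>A. \<Sum>k\<in>K. \<Sum>m\<in>M. \<Sum>b\<in>B. F a k m b) = (\<Sum>a\<in>A. \<Sum>b\<in>B. \<Sum>k\<in>K. \<Sum>m\<in>M. F a k m b)"
    by (rule sum.cong[OF refl]) (rule sum_pull2)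
  also have "\<dots> = (\<Sum>b\<in>B. \<Sum>a\<in>A. \<Sum>k\<in>K. \<Sum>m\<in>M. F a k m b)" by (rule sum.swap)
  also have "\<dots> = (\<Sum>b\<in>B. \<Sum>k\<in>K. \<Sum>m\<in>M. \<Sum>a\<in>A. F a k m b)"
    by (rule sum.cong[OF refl]) (rule sum_pull2[symmetric])
  finally show ?thesis .
qed

lemma sum_swap5: "(\<Sum>a\<in>A. \<Sum>j\<in>J. \<Sum>k\<in>K. \<Sum>m\<in>M. \<Sum>b\<in>B. F a j k m b) = (\<Sum>b\<in>B. \<Sum>j\<in>J. \<Sum>k\<in>K. \<Sum>m\<in>M. \<Sum>a\<in>A. F a j k m b)"
proof -
  have "(\<Sum>a\<in>A. \<Sum>j\<in>J. \<Sum>k\<in>K. \<Sum>m\<in>M. \<Sum>b\<in>B. F a j k m b) = (\<Sum>a\<in>A. \<Sum>b\<in>B. \<Sum>j\<in>J. \<Sum>k\<in>K. \<Sum>m\<in>M. F a j k m b)"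
    by (rule sum.cong[OF refl]) (rule sum_pull3)
  also have "\<dots> = (\<Sum>b\<in>B. \<Sum>a\<in>A. \<Sum>j\<in>J. \<Sum>k\<in>K. \<Sum>m\<in>M. F a j k m b)" by (rule sum.swap)
  also have "\<dots> = (\<Sum>b\<in>B. \<Sum>j\<in>J. \<Sum>k\<in>K. \<Sum>m\<in>M. \<Sum>a\<in>A. F a j k m b)"
    by (rule sum.cong[OF refl]) (rule sum_pull3[symmetric])
  finally show ?thesis .
qed

section \<open>Tensors\<close>

type_synonym tens = "nat \<Rightarrow> nat \<Rightarrow> nat \<Rightarrow> nat \<Rightarrow> complex"

definition Phi :: "nat \<Rightarrow> tens \<Rightarrow> fa" where
  "Phi n x = (\<lambda>w. \<Sum>i\<in>{1..n}. \<Sum>j\<in>{1..n}. \<Sum>k\<in>{1..n}. \<Sum>m\<in>{1..n}. x i j k m * gw [eh n i j, eh n k m] w)"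

definition act_t :: "nat \<Rightarrow> cmat \<Rightarrow> tens \<Rightarrow> tens" where
  "act_t n X x = (\<lambda>i j k m. (\<Sum>s\<in>{1..n}. X i s * x s j k m) - (\<Sum>s\<in>{1..n}. x i s k m * X s j)
      + (\<Sum>s\<in>{1..n}. X k s * x i j s m) - (\<Sum>s\<in>{1..n}. x i j k s * X s m))"

lemma ad_sum1: "ad X (\<lambda>w. \<Sum>s\<in>S. F s w) = (\<lambda>w. \<Sum>s\<in>S. ad X (F s) w)"
  using ad_sum[where c="\<lambda>_. 1"] by simp

lemma ad_Phi_expand: "ad X (Phi n x) = (\<lambda>w. \<Sum>i\<in>{1..n}. \<Sum>j\<in>{1..n}. \<Sum>k\<in>{1..n}. \<Sum>m\<in>{1..n}. x i j k m * ad X (gw [eh n i j, eh n k m]) w)"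
  unfolding Phi_def ad_sum1 ad_smult ..

lemma Phi_act_expand:
  fixes G :: "nat \<Rightarrow> nat \<Rightarrow> nat \<Rightarrow> nat \<Rightarrow> complex" and B :: "nat set"
  shows "(\<Sum>i\<in>B. \<Sum>j\<in>B. \<Sum>k\<in>B. \<Sum>m\<in>B. x i j k m * (\<Sum>s\<in>B. (X s i * G s j k m - X j s * G i s k m
         + (X s k * G i j s m - X m s * G i j k s))))
   = (\<Sum>i\<in>B. \<Sum>j\<in>B. \<Sum>k\<in>B. \<Sum>m\<in>B. ((\<Sum>s\<in>B. X i s * x s j k m) - (\<Sum>s\<in>B. x i s k m * X s j)
      + (\<Sum>s\<in>B. X k s * x i j s m) - (\<Sum>s\<in>B. x i j k s * X s m)) * G i j k m)"
proof -
  have p1: "(\<Sum>i\<in>B. \<Sum>j\<in>B. \<Sum>k\<in>B. \<Sum>m\<in>B. \<Sum>s\<in>B. x i j k m * (X s i * G s j k m))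
     = (\<Sum>i\<in>B. \<Sum>j\<in>B. \<Sum>k\<in>B. \<Sum>m\<in>B. (\<Sum>s\<in>B. X i s * x s j k m) * G i j k m)"
    by (subst sum_swap5) (simp add: sum_distrib_left sum_distrib_right mult_ac)
  have p2: "(\<Sum>i\<in>B. \<Sum>j\<in>B. \<Sum>k\<in>B. \<Sum>m\<in>B. \<Sum>s\<in>B. x i j k m * (X j s * G i s k m))
     = (\<Sum>i\<in>B. \<Sum>j\<in>B. \<Sum>k\<in>B. \<Sum>m\<in>B. (\<Sum>s\<in>B. x i s k m * X s j) * G i j k m)"
    by (rule sum.cong[OF refl], subst sum_swap4) (simp add: sum_distrib_left sum_distrib_right mult_ac)
  have p3: "(\<Sum>i\<in>B. \<Sum>j\<in>B. \<Sum>k\<in>B. \<Sum>m\<in>B. \<Sum>s\<in>B. x i j k m * (X s k * G i j s m))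
     = (\<Sum>i\<in>B. \<Sum>j\<in>B. \<Sum>k\<in>B. \<Sum>m\<in>B. (\<Sum>s\<in>B. X k s * x i j s m) * G i j k m)"
    by (rule sum.cong[OF refl], rule sum.cong[OF refl], subst sum_swap3) (simp add: sum_distrib_left sum_distrib_right mult_ac)
  have p4: "(\<Sum>i\<in>B. \<Sum>j\<in>B. \<Sum>k\<in>B. \<Sum>m\<in>B. \<Sum>s\<in>B. x i j k m * (X m s * G i j k s))
     = (\<Sum>i\<in>B. \<Sum>j\<in>B. \<Sum>k\<in>B. \<Sum>m\<in>B. (\<Sum>s\<in>B. x i j k s * X s m) * G i j k m)"
    by (rule sum.cong[OF refl], rule sum.cong[OF refl], rule sum.cong[OF refl], subst sum.swap) (simp add: sum_distrib_left sum_distrib_right mult_ac)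
  show ?thesis
    using p1 p2 p3 p4
    by (simp add: sum_distrib_left right_diff_distrib distrib_left left_diff_distrib distrib_right sum.distrib sum_subtractf)
qed

lemma ad_Phi:
  assumes n: "n \<ge> 1" and X: "X \<in> sl n"
  shows "eqv n (ad X (Phi n x)) (Phi n (act_t n X x))"
proof -
  have "eqv n (ad X (Phi n x)) (\<lambda>w. \<Sum>i\<in>{1..n}. \<Sum>j\<in>{1..n}. \<Sum>k\<in>{1..n}. \<Sum>m\<in>{1..n}. x i j k m *
     (\<Sum>s\<in>{1..n}. (X s i * gw [eh n s j, eh n k m] w - X j s * gw [eh n i s, eh n k m] w
         + (X s k * gw [eh n i j, eh n s m] w - X m s * gw [eh n i j, eh n k s] w))))"
    unfolding ad_Phi_expand
    by (intro eqv_sum' eqv_sum ad_eh2 n X finite_atLeastAtMost) auto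
  also have "\<dots> = Phi n (act_t n X x)"
    unfolding Phi_def act_t_def by (rule ext) (rule Phi_act_expand)
  finally show ?thesis .
qed


lemma Phi_add: "Phi n (\<lambda>i j k m. x i j k m + y i j k m) = (\<lambda>w. Phi n x w + Phi n y w)"
  unfolding Phi_def by (simp add: distrib_right sum.distrib)
lemma Phi_diff: "Phi n (\<lambda>i j k m. x i j k m - y i j k m) = (\<lambda>w. Phi n x w - Phi n y w)"
  unfolding Phi_def by (simp add: left_diff_distrib sum_subtractf)
lemma Phi_smult: "Phi n (\<lambda>i j k m. c * x i j k m) = (\<lambda>w. c * Phi n x w)"
  unfolding Phi_def by (simp add: sum_distrib_left mult.assoc)
lemma Phi_sum: "Phi n (\<lambda>i j k m. \<Sum>J\<in>S. c J * Y J i j k m) = (\<lambda>w. \<Sum>J\<in>S. c J * Phi n (Y J) w)"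
proof (rule ext)
  fix w
  let ?G = "\<lambda>i j k m. gw [eh n i j, eh n k m] w"
  let ?B = "{1..n}"
  have "(\<Sum>i\<in>?B. \<Sum>j\<in>?B. \<Sum>k\<in>?B. \<Sum>m\<in>?B. (\<Sum>J\<in>S. c J * Y J i j k m) * ?G i j k m)
     = (\<Sum>i\<in>?B. \<Sum>j\<in>?B. \<Sum>k\<in>?B. \<Sum>m\<in>?B. \<Sum>J\<in>S. c J * (Y J i j k m * ?G i j k m))"
    by (simp add: sum_distrib_right mult.assoc)
  also have "\<dots> = (\<Sum>i\<in>?B. \<Sum>J\<in>S. \<Sum>j\<in>?B. \<Sum>k\<in>?B. \<Sum>m\<in>?B. c J * (Y J i j k m * ?G i j k m))"
    by (rule sum.cong[OF refl]) (rule sum_pull3)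
  also have "\<dots> = (\<Sum>J\<in>S. \<Sum>i\<in>?B. \<Sum>j\<in>?B. \<Sum>k\<in>?B. \<Sum>m\<in>?B. c J * (Y J i j k m * ?G i j k m))"
    by (rule sum.swap)
  also have "\<dots> = (\<Sum>J\<in>S. c J * (\<Sum>i\<in>?B. \<Sum>j\<in>?B. \<Sum>k\<in>?B. \<Sum>m\<in>?B. Y J i j k m * ?G i j k m))"
    by (simp add: sum_distrib_left)
  finally show "Phi n (\<lambda>i j k m. \<Sum>J\<in>S. c J * Y J i j k m) w = (\<Sum>J\<in>S. c J * Phi n (Y J) w)"
    unfolding Phi_def .
qed

lemma Phi_cong: "(\<And>i j k m. i \<in> {1..n} \<Longrightarrow> j \<in> {1..n} \<Longrightarrow> k \<in> {1..n} \<Longrightarrow> m \<in> {1..n} \<Longrightarrow> x i j k m = y i j k m)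
   \<Longrightarrow> Phi n x = Phi n y"
  unfolding Phi_def by (intro ext sum.cong refl) simp

lemma Phi_zero: "(\<And>i j k m. i \<in> {1..n} \<Longrightarrow> j \<in> {1..n} \<Longrightarrow> k \<in> {1..n} \<Longrightarrow> m \<in> {1..n} \<Longrightarrow> x i j k m = 0)
   \<Longrightarrow> Phi n x = (\<lambda>w. 0)"
  unfolding Phi_def by (intro ext sum.neutral ballI) simp

section \<open>The tensor model K'\<close>

definition Kp :: "nat \<Rightarrow> tens \<Rightarrow> bool" where
  "Kp n x \<longleftrightarrow> (\<forall>i\<in>{1..n}. \<forall>j\<in>{1..n}. \<forall>k\<in>{1..n}. \<forall>m\<in>{1..n}. x k j i m = - x i j k m)
     \<and> (\<forall>i\<in>{1..n}. \<forall>j\<in>{1..n}. \<forall>k\<in>{1..n}. \<forall>m\<in>{1..n}. x i m k j = - x i j k m)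
     \<and> (\<forall>k\<in>{1..n}. \<forall>m\<in>{1..n}. (\<Sum>i\<in>{1..n}. x i i k m) = 0)"

lemma KpD:
  assumes "Kp n x" "i \<in> {1..n}" "j \<in> {1..n}" "k \<in> {1..n}" "m \<in> {1..n}"
  shows "x k j i m = - x i j k m" "x i m k j = - x i j k m"
  using assms unfolding Kp_def by blast+
lemma KpD3:
  assumes "Kp n x" "k \<in> {1..n}" "m \<in> {1..n}"
  shows "(\<Sum>i\<in>{1..n}. x i i k m) = 0"
  using assms unfolding Kp_def by blast
lemma KpI:
  assumes "\<And>i j k m. i \<in> {1..n} \<Longrightarrow> j \<in> {1..n} \<Longrightarrow> k \<in> {1..n} \<Longrightarrow> m \<in> {1..n} \<Longrightarrow> x k j i m = - x i j k m"
    "\<And>i j k m. i \<in> {1..n} \<Longrightarrow> j \<in> {1..n} \<Longrightarrow> k \<in> {1..n} \<Longrightarrow> m \<in> {1..n} \<Longrightarrow> x i m k j = - x i j k m"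
    "\<And>k m. k \<in> {1..n} \<Longrightarrow> m \<in> {1..n} \<Longrightarrow> (\<Sum>i\<in>{1..n}. x i i k m) = 0"
  shows "Kp n x"
  using assms unfolding Kp_def by blast

lemma Kp_add: assumes "Kp n x" "Kp n y" shows "Kp n (\<lambda>i j k m. x i j k m + y i j k m)"
proof (rule KpI)
  fix i j k m assume h: "i \<in> {1..n}" "j \<in> {1..n}" "k \<in> {1..n}" "m \<in> {1..n}"
  show "x k j i m + y k j i m = - (x i j k m + y i j k m)"
    using KpD(1)[OF assms(1) h] KpD(1)[OF assms(2) h] by simp
  show "x i m k j + y i m k j = - (x i j k m + y i j k m)"
    using KpD(2)[OF assms(1) h] KpD(2)[OF assms(2) h] by simp
next
  fix k m assume h: "k \<in> {1..n}" "m \<in> {1..n}"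
  show "(\<Sum>i\<in>{1..n}. x i i k m + y i i k m) = 0"
    using KpD3[OF assms(1) h] KpD3[OF assms(2) h] by (simp add: sum.distrib)
qed
lemma Kp_smult: assumes "Kp n x" shows "Kp n (\<lambda>i j k m. c * x i j k m)"
proof (rule KpI)
  fix i j k m assume h: "i \<in> {1..n}" "j \<in> {1..n}" "k \<in> {1..n}" "m \<in> {1..n}"
  show "c * x k j i m = - (c * x i j k m)"
    using KpD(1)[OF assms(1) h] by simp
  show "c * x i m k j = - (c * x i j k m)"
    using KpD(2)[OF assms(1) h] by simp
next
  fix k m assume h: "k \<in> {1..n}" "m \<in> {1..n}"
  show "(\<Sum>i\<in>{1..n}. c * x i i k m) = 0"
    using KpD3[OF assms(1) h] by (simp add: sum_distrib_left[symmetric])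
qed
lemma Kp_zero: "Kp n (\<lambda>i j k m. 0)"
  unfolding Kp_def by simp

lemma Kp_act:
  assumes K: "Kp n x"
  shows "Kp n (act_t n X x)"
proof -
  have a13: "\<And>i j k m. i \<in> {1..n} \<Longrightarrow> j \<in> {1..n} \<Longrightarrow> k \<in> {1..n} \<Longrightarrow> m \<in> {1..n} \<Longrightarrow> x k j i m = - x i j k m"
    using K unfolding Kp_def by blast
  have a24: "\<And>i j k m. i \<in> {1..n} \<Longrightarrow> j \<in> {1..n} \<Longrightarrow> k \<in> {1..n} \<Longrightarrow> m \<in> {1..n} \<Longrightarrow> x i m k j = - x i j k m"
    using K unfolding Kp_def by blast
  have tr: "\<And>k m. k \<in> {1..n} \<Longrightarrow> m \<in> {1..n} \<Longrightarrow> (\<Sum>i\<in>{1..n}. x i i k m) = 0"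
    using K unfolding Kp_def by blast
  have b13: "act_t n X x k j i m = - act_t n X x i j k m"
    if h: "i \<in> {1..n}" "j \<in> {1..n}" "k \<in> {1..n}" "m \<in> {1..n}" for i j k m
  proof -
    have "(\<Sum>s\<in>{1..n}. X k s * x s j i m) = - (\<Sum>s\<in>{1..n}. X k s * x i j s m)"
      by (subst sum_negf[symmetric], rule sum.cong[OF refl]) (simp add: a13[OF h(1) h(2) _ h(4)])
    moreover have "(\<Sum>s\<in>{1..n}. x k s i m * X s j) = - (\<Sum>s\<in>{1..n}. x i s k m * X s j)"
      by (subst sum_negf[symmetric], rule sum.cong[OF refl]) (simp add: a13[OF h(1) _ h(3) h(4)])
    moreover have "(\<Sum>s\<in>{1..n}. X i s * x k j s m) = - (\<Sum>s\<in>{1..n}. X i s * x s j k m)"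
      by (subst sum_negf[symmetric], rule sum.cong[OF refl]) (simp add: a13[OF _ h(2) h(3) h(4)])
    moreover have "(\<Sum>s\<in>{1..n}. x k j i s * X s m) = - (\<Sum>s\<in>{1..n}. x i j k s * X s m)"
      by (subst sum_negf[symmetric], rule sum.cong[OF refl]) (simp add: a13[OF h(1) h(2) h(3) _])
    ultimately show ?thesis unfolding act_t_def by simp
  qed
  have b24: "act_t n X x i m k j = - act_t n X x i j k m"
    if h: "i \<in> {1..n}" "j \<in> {1..n}" "k \<in> {1..n}" "m \<in> {1..n}" for i j k m
  proof -
    have "(\<Sum>s\<in>{1..n}. X i s * x s m k j) = - (\<Sum>s\<in>{1..n}. X i s * x s j k m)"
      by (subst sum_negf[symmetric], rule sum.cong[OF refl]) (simp add: a24[OF _ h(2) h(3) h(4)])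
    moreover have "(\<Sum>s\<in>{1..n}. x i s k j * X s m) = - (\<Sum>s\<in>{1..n}. x i j k s * X s m)"
      by (subst sum_negf[symmetric], rule sum.cong[OF refl]) (simp add: a24[OF h(1) h(2) h(3) _])
    moreover have "(\<Sum>s\<in>{1..n}. X k s * x i m s j) = - (\<Sum>s\<in>{1..n}. X k s * x i j s m)"
      by (subst sum_negf[symmetric], rule sum.cong[OF refl]) (simp add: a24[OF h(1) h(2) _ h(4)])
    moreover have "(\<Sum>s\<in>{1..n}. x i m k s * X s j) = - (\<Sum>s\<in>{1..n}. x i s k m * X s j)"
      by (subst sum_negf[symmetric], rule sum.cong[OF refl]) (simp add: a24[OF h(1) _ h(3) h(4)])
    ultimately show ?thesis unfolding act_t_def by simp
  qed
  have btr: "(\<Sum>i\<in>{1..n}. act_t n X x i i k m) = 0" if h: "k \<in> {1..n}" "m \<in> {1..n}" for k m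
  proof -
    have 1: "(\<Sum>i\<in>{1..n}. \<Sum>s\<in>{1..n}. X i s * x s i k m) = (\<Sum>i\<in>{1..n}. \<Sum>s\<in>{1..n}. x i s k m * X s i)"
      by (rule trans[OF sum.swap]) (simp add: mult.commute)
    have 2: "(\<Sum>i\<in>{1..n}. \<Sum>s\<in>{1..n}. X k s * x i i s m) = 0"
    proof -
      have "(\<Sum>i\<in>{1..n}. \<Sum>s\<in>{1..n}. X k s * x i i s m) = (\<Sum>s\<in>{1..n}. \<Sum>i\<in>{1..n}. X k s * x i i s m)"
        by (rule sum.swap)
      also have "\<dots> = (\<Sum>s\<in>{1..n}. X k s * (\<Sum>i\<in>{1..n}. x i i s m))"
        by (simp only: sum_distrib_left)
      also have "\<dots> = 0"
      proof (rule sum.neutral, rule ballI)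
        fix s assume s: "s \<in> {1..n}"
        show "X k s * (\<Sum>i\<in>{1..n}. x i i s m) = 0" using tr[OF s h(2)] by simp
      qed
      finally show ?thesis .
    qed
    have 3: "(\<Sum>i\<in>{1..n}. \<Sum>s\<in>{1..n}. x i i k s * X s m) = 0"
    proof -
      have "(\<Sum>i\<in>{1..n}. \<Sum>s\<in>{1..n}. x i i k s * X s m) = (\<Sum>s\<in>{1..n}. \<Sum>i\<in>{1..n}. x i i k s * X s m)"
        by (rule sum.swap)
      also have "\<dots> = (\<Sum>s\<in>{1..n}. (\<Sum>i\<in>{1..n}. x i i k s) * X s m)"
        by (simp only: sum_distrib_right)
      also have "\<dots> = 0"
      proof (rule sum.neutral, rule ballI)
        fix s assume s: "s \<in> {1..n}"
        show "(\<Sum>i\<in>{1..n}. x i i k s) * X s m = 0" using tr[OF h(1) s] by simp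
      qed
      finally show ?thesis .
    qed
    show ?thesis unfolding act_t_def using 1 2 3 by (simp add: sum.distrib sum_subtractf)
  qed
  show ?thesis unfolding Kp_def using b13 b24 btr by blast
qed

lemma R_pre_model:
  assumes n: "n \<ge> 1" and t0: "Kp n t0" "eqv n v (Phi n t0)"
  shows "f \<in> R_pre n v \<Longrightarrow> \<exists>x. Kp n x \<and> eqv n f (Phi n x)"
proof (induction rule: R_pre.induct)
  case base then show ?case using t0 by blast
next
  case (ideal f)
  have "Phi n (\<lambda>i j k m. 0) = (\<lambda>w. 0)" by (rule Phi_zero) simp
  then show ?case using ideal Kp_zero eqv_0 by metis
next
  case (add f g)
  then obtain x y where "Kp n x" "eqv n f (Phi n x)" "Kp n y" "eqv n g (Phi n y)" by blast
  then show ?case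
    by (intro exI[of _ "\<lambda>i j k m. x i j k m + y i j k m"]) (simp add: Kp_add Phi_add eqv_add)
next
  case (smult f c)
  then obtain x where "Kp n x" "eqv n f (Phi n x)" by blast
  then show ?case
    by (intro exI[of _ "\<lambda>i j k m. c * x i j k m"]) (simp add: Kp_smult Phi_smult eqv_smult)
next
  case (adj X f)
  then obtain x where x: "Kp n x" "eqv n f (Phi n x)" by blast
  have "eqv n (ad X f) (ad X (Phi n x))" using adj x by (intro ad_eqv) auto
  also have "eqv n \<dots> (Phi n (act_t n X x))" using n adj by (intro ad_Phi) auto
  finally (eqv_trans) show ?case using x Kp_act by blast
qed

section \<open>Weights\<close>

lemma pow4_le: "a \<le> b \<Longrightarrow> (4::nat)^a + 4^b < 4^(Suc b)"
proof -
  assume "a \<le> b"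
  then have "(4::nat)^a \<le> 4^b" by (simp add: power_increasing)
  moreover have "(0::nat) < 4^b" by simp
  moreover have "(4::nat)^Suc b = 4 * 4^b" by simp
  ultimately show ?thesis by linarith
qed

lemma pow4_inj2_aux: "a \<le> b \<Longrightarrow> c \<le> d \<Longrightarrow> (4::nat)^a + 4^b = 4^c + 4^d \<Longrightarrow> a = c \<and> b = d"
proof -
  assume ab: "a \<le> b" and cd: "c \<le> d" and eq: "(4::nat)^a + 4^b = 4^c + 4^d"
  have "b = d"
  proof (rule ccontr)
    assume "b \<noteq> d"
    then consider "b < d" | "d < b" by linarith
    then show False
    proof cases
      case 1
      have "(4::nat)^a + 4^b < 4^(Suc b)" using ab by (rule pow4_le)
      also have "\<dots> \<le> 4^d" using 1 by (intro power_increasing) auto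
      also have "\<dots> \<le> 4^c + 4^d" by simp
      finally show False using eq by simp
    next
      case 2
      have "(4::nat)^c + 4^d < 4^(Suc d)" using cd by (rule pow4_le)
      also have "\<dots> \<le> 4^b" using 2 by (intro power_increasing) auto
      also have "\<dots> \<le> 4^a + 4^b" by simp
      finally show False using eq by simp
    qed
  qed
  then have "(4::nat)^a = 4^c" using eq by simp
  then have "a = c" by simp
  with \<open>b = d\<close> show ?thesis by simp
qed

lemma pow4_inj2: "(4::nat)^i + 4^k = 4^j + 4^m \<Longrightarrow> (i = j \<and> k = m) \<or> (i = m \<and> k = j)"
proof -
  assume eq: "(4::nat)^i + 4^k = 4^j + 4^m"
  consider "i \<le> k" "j \<le> m" | "i \<le> k" "m \<le> j" | "k \<le> i" "j \<le> m" | "k \<le> i" "m \<le> j" by linarith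
  then show ?thesis
  proof cases
    case 1 then show ?thesis using pow4_inj2_aux[of i k j m] eq by simp
  next
    case 2 then show ?thesis using pow4_inj2_aux[of i k m j] eq by (simp add: add.commute)
  next
    case 3 then show ?thesis using pow4_inj2_aux[of k i j m] eq by (simp add: add.commute)
  next
    case 4 then show ?thesis using pow4_inj2_aux[of k i m j] eq by (simp add: add.commute)
  qed
qed

definition wt :: "nat \<Rightarrow> nat \<Rightarrow> nat \<Rightarrow> nat \<Rightarrow> complex" where
  "wt i j k m = of_nat (4^i) - of_nat (4^j) + of_nat (4^k) - of_nat (4^m)"

lemma wt_zero_iff: "wt i j k m = 0 \<longleftrightarrow> (i = j \<and> k = m) \<or> (i = m \<and> k = j)"
proof
  assume "wt i j k m = 0"
  then have "(of_nat (4^i + 4^k) :: complex) = of_nat (4^j + 4^m)"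
    unfolding wt_def by (simp add: algebra_simps)
  then have "(4::nat)^i + 4^k = 4^j + 4^m" using of_nat_eq_iff by blast
  then show "(i = j \<and> k = m) \<or> (i = m \<and> k = j)" by (rule pow4_inj2)
next
  assume "(i = j \<and> k = m) \<or> (i = m \<and> k = j)"
  then show "wt i j k m = 0" unfolding wt_def by auto
qed

definition H0 :: "nat \<Rightarrow> cmat" where
  "H0 n = (\<lambda>a b. if a = b \<and> a \<in> {1..n} then of_nat (4^a) - (\<Sum>c\<in>{1..n}. of_nat (4^c)) / of_nat n else 0)"

lemma H0_cartan: "n \<ge> 1 \<Longrightarrow> H0 n \<in> cartan n"
proof -
  assume n: "n \<ge> 1"
  have "(\<Sum>a\<in>{1..n}. H0 n a a) = (\<Sum>a\<in>{1..n}. of_nat (4^a)) - (\<Sum>a\<in>{1..n}. (\<Sum>c\<in>{1..n}. of_nat (4^c)) / (of_nat n :: complex))"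
    unfolding H0_def by (simp add: sum_subtractf)
  also have "(\<Sum>a\<in>{1..n}. (\<Sum>c\<in>{1..n}. of_nat (4^c)) / (of_nat n :: complex)) = (\<Sum>c\<in>{1..n}. of_nat (4^c))"
    using n by simp
  finally have "(\<Sum>a\<in>{1..n}. H0 n a a) = 0" by simp
  then show ?thesis by (auto simp: cartan_def sl_def H0_def split: if_splits)
qed

lemma act_diag:
  assumes H: "H \<in> cartan n" and h: "i \<in> {1..n}" "j \<in> {1..n}" "k \<in> {1..n}" "m \<in> {1..n}"
  shows "act_t n H x i j k m = (H i i - H j j + H k k - H m m) * x i j k m"
proof -
  have off: "\<And>a b. a \<noteq> b \<Longrightarrow> H a b = 0" using H by (simp add: cartan_def)
  have e: "(\<Sum>s\<in>{1..n}. H a s * f s) = H a a * f a" if "a \<in> {1..n}" for a f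
  proof -
    have "(\<Sum>s\<in>{1..n}. H a s * f s) = (\<Sum>s\<in>{1..n}. if s = a then H a a * f a else 0)"
      by (rule sum.cong) (auto simp: off)
    also have "\<dots> = H a a * f a" using that by (simp only: sum.delta finite_atLeastAtMost if_True)
    finally show ?thesis .
  qed
  have e2: "(\<Sum>s\<in>{1..n}. f s * H s a) = f a * H a a" if "a \<in> {1..n}" for a f
  proof -
    have "(\<Sum>s\<in>{1..n}. f s * H s a) = (\<Sum>s\<in>{1..n}. if s = a then f a * H a a else 0)"
      by (rule sum.cong) (auto simp: off)
    also have "\<dots> = f a * H a a" using that by (simp only: sum.delta finite_atLeastAtMost if_True)
    finally show ?thesis .
  qed
  show ?thesis unfolding act_t_def e[OF h(1)] e2[OF h(2)] e[OF h(3)] e2[OF h(4)] by (simp add: algebra_simps)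
qed

lemma act_H0:
  assumes n: "n \<ge> 1" and h: "i \<in> {1..n}" "j \<in> {1..n}" "k \<in> {1..n}" "m \<in> {1..n}"
  shows "act_t n (H0 n) x i j k m = wt i j k m * x i j k m"
  using act_diag[OF H0_cartan[OF n] h] h by (simp add: H0_def wt_def)


lemma extract_aux:
  assumes S: "finite S"
  shows "\<forall>x::tens. (\<forall>i\<in>{1..n}. \<forall>j\<in>{1..n}. \<forall>k\<in>{1..n}. \<forall>m\<in>{1..n}. x i j k m \<noteq> 0 \<longrightarrow> wt i j k m \<in> insert 0 S)
     \<longrightarrow> (\<forall>p. Phi n (\<lambda>i j k m. wt i j k m ^ Suc p * x i j k m) \<in> U_ideal n)
     \<longrightarrow> Phi n (\<lambda>i j k m. if wt i j k m = 0 then 0 else x i j k m) \<in> U_ideal n"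
  using S
proof (induction S rule: finite_induct)
  case empty
  show ?case
  proof (intro allI impI)
    fix x :: tens assume supp: "\<forall>i\<in>{1..n}. \<forall>j\<in>{1..n}. \<forall>k\<in>{1..n}. \<forall>m\<in>{1..n}. x i j k m \<noteq> 0 \<longrightarrow> wt i j k m \<in> insert 0 {}"
    have "Phi n (\<lambda>i j k m. if wt i j k m = 0 then 0 else x i j k m) = (\<lambda>w. 0)"
    proof (rule Phi_zero)
      fix i j k m assume h: "i \<in> {1..n}" "j \<in> {1..n}" "k \<in> {1..n}" "m \<in> {1..n}"
      show "(if wt i j k m = 0 then 0 else x i j k m) = 0"
        using supp h by (cases "x i j k m = 0") auto
    qed
    then show "Phi n (\<lambda>i j k m. if wt i j k m = 0 then 0 else x i j k m) \<in> U_ideal n"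
      by (simp add: U_ideal.zero)
  qed
next
  case (insert mu S)
  show ?case
  proof (intro allI impI)
    fix x :: tens
    assume supp: "\<forall>i\<in>{1..n}. \<forall>j\<in>{1..n}. \<forall>k\<in>{1..n}. \<forall>m\<in>{1..n}. x i j k m \<noteq> 0 \<longrightarrow> wt i j k m \<in> insert 0 (insert mu S)"
      and hyp: "\<forall>p. Phi n (\<lambda>i j k m. wt i j k m ^ Suc p * x i j k m) \<in> U_ideal n"
    show "Phi n (\<lambda>i j k m. if wt i j k m = 0 then 0 else x i j k m) \<in> U_ideal n"
    proof (cases "mu = 0")
      case True
      then have e: "insert 0 (insert mu S) = insert 0 S" by auto
      show ?thesis by (rule mp[OF mp[OF spec[OF insert.IH, of x] supp[unfolded e]] hyp])
    next
      case False
      define y where "y = (\<lambda>i j k m. (wt i j k m - mu) * x i j k m)"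
      have suppy: "\<forall>i\<in>{1..n}. \<forall>j\<in>{1..n}. \<forall>k\<in>{1..n}. \<forall>m\<in>{1..n}. y i j k m \<noteq> 0 \<longrightarrow> wt i j k m \<in> insert 0 S"
      proof (intro ballI impI)
        fix i j k m assume h: "i \<in> {1..n}" "j \<in> {1..n}" "k \<in> {1..n}" "m \<in> {1..n}" and y0: "y i j k m \<noteq> 0"
        have "x i j k m \<noteq> 0" "wt i j k m \<noteq> mu" using y0 by (auto simp: y_def)
        then have "wt i j k m \<in> insert 0 (insert mu S)" using supp h by blast
        then show "wt i j k m \<in> insert 0 S" using \<open>wt i j k m \<noteq> mu\<close> by simp
      qed
      have hypy: "\<forall>p. Phi n (\<lambda>i j k m. wt i j k m ^ Suc p * y i j k m) \<in> U_ideal n"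
      proof
        fix p
        have "(\<lambda>i j k m. wt i j k m ^ Suc p * y i j k m) =
           (\<lambda>i j k m. wt i j k m ^ Suc (Suc p) * x i j k m - mu * (wt i j k m ^ Suc p * x i j k m))"
          by (simp add: y_def algebra_simps)
        then have "Phi n (\<lambda>i j k m. wt i j k m ^ Suc p * y i j k m) =
           (\<lambda>w. Phi n (\<lambda>i j k m. wt i j k m ^ Suc (Suc p) * x i j k m) w - mu * Phi n (\<lambda>i j k m. wt i j k m ^ Suc p * x i j k m) w)"
          by (simp add: Phi_diff Phi_smult)
        also have "\<dots> \<in> U_ideal n"
          by (intro I_diff U_ideal.smult spec[OF hyp])
        finally show "Phi n (\<lambda>i j k m. wt i j k m ^ Suc p * y i j k m) \<in> U_ideal n" .
      qed
      have IHy: "Phi n (\<lambda>i j k m. if wt i j k m = 0 then 0 else y i j k m) \<in> U_ideal n"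
        by (rule mp[OF mp[OF spec[OF insert.IH, of y] suppy] hypy])
      have "(\<lambda>i j k m. if wt i j k m = 0 then 0 else y i j k m) =
          (\<lambda>i j k m. wt i j k m ^ Suc 0 * x i j k m - mu * (if wt i j k m = 0 then 0 else x i j k m))"
        by (auto simp: y_def algebra_simps intro!: ext)
      then have "Phi n (\<lambda>i j k m. if wt i j k m = 0 then 0 else y i j k m) =
          (\<lambda>w. Phi n (\<lambda>i j k m. wt i j k m ^ Suc 0 * x i j k m) w - mu * Phi n (\<lambda>i j k m. if wt i j k m = 0 then 0 else x i j k m) w)"
        by (simp add: Phi_diff Phi_smult)
      then have "(\<lambda>w. Phi n (\<lambda>i j k m. wt i j k m ^ Suc 0 * x i j k m) w - mu * Phi n (\<lambda>i j k m. if wt i j k m = 0 then 0 else x i j k m) w) \<in> U_ideal n"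
        using IHy by simp
      from I_diff[OF spec[OF hyp, of 0] this]
      have "(\<lambda>w. mu * Phi n (\<lambda>i j k m. if wt i j k m = 0 then 0 else x i j k m) w) \<in> U_ideal n"
        by simp
      from U_ideal.smult[OF this, of "1 / mu"]
      show ?thesis using False by simp
    qed
  qed
qed

definition zw :: "nat \<Rightarrow> tens \<Rightarrow> bool" where
  "zw n x \<longleftrightarrow> (\<forall>i\<in>{1..n}. \<forall>j\<in>{1..n}. \<forall>k\<in>{1..n}. \<forall>m\<in>{1..n}. x i j k m \<noteq> 0 \<longrightarrow> (i = j \<and> k = m) \<or> (i = m \<and> k = j))"

lemma wt_swap13: "wt k j i m = wt i j k m" by (simp add: wt_def algebra_simps)
lemma wt_swap24: "wt i m k j = wt i j k m" by (simp add: wt_def algebra_simps)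
lemma wt_diag: "wt i i k m = of_nat (4^k) - of_nat (4^m)" by (simp add: wt_def)

lemma Kp_x0:
  assumes K: "Kp n x"
  shows "Kp n (\<lambda>i j k m. if wt i j k m = 0 then x i j k m else 0)"
proof (rule KpI)
  fix i j k m assume h: "i \<in> {1..n}" "j \<in> {1..n}" "k \<in> {1..n}" "m \<in> {1..n}"
  show "(if wt k j i m = 0 then x k j i m else 0) = - (if wt i j k m = 0 then x i j k m else 0)"
    using KpD(1)[OF K h] by (simp add: wt_swap13)
  show "(if wt i m k j = 0 then x i m k j else 0) = - (if wt i j k m = 0 then x i j k m else 0)"
    using KpD(2)[OF K h] by (simp add: wt_swap24)
next
  fix k m assume h: "k \<in> {1..n}" "m \<in> {1..n}"
  show "(\<Sum>i\<in>{1..n}. if wt i i k m = 0 then x i i k m else 0) = 0"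
    using KpD3[OF K h] unfolding wt_diag
    by (cases "(of_nat (4^k) - of_nat (4^m) :: complex) = 0") simp_all
qed

lemma zw_x0: "zw n (\<lambda>i j k m. if wt i j k m = 0 then x i j k m else 0)"
  unfolding zw_def by (auto simp: wt_zero_iff)

lemma R0_reduce:
  assumes n: "n \<ge> 1" and t0: "Kp n t0" "eqv n v (Phi n t0)" and f: "f \<in> R0_pre n v"
  shows "\<exists>x. Kp n x \<and> zw n x \<and> eqv n f (Phi n x)"
proof -
  have fR: "f \<in> R_pre n v" and fH: "ad (H0 n) f \<in> U_ideal n"
    using f H0_cartan[OF n] by (auto simp: R0_pre_def)
  obtain x where K: "Kp n x" and fx: "eqv n f (Phi n x)" using R_pre_model[OF n t0 fR] by blast
  have Hsl: "H0 n \<in> sl n" using H0_cartan[OF n] by (simp add: cartan_def)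
  have actp: "Phi n (act_t n (H0 n) z) = Phi n (\<lambda>i j k m. wt i j k m * z i j k m)" for z
    by (rule Phi_cong) (simp add: act_H0[OF n])
  have pw: "Phi n (\<lambda>i j k m. wt i j k m ^ Suc p * x i j k m) \<in> U_ideal n" for p
  proof (induction p)
    case 0
    have "eqv n (ad (H0 n) f) (ad (H0 n) (Phi n x))" using Hsl fx by (rule ad_eqv)
    also have "eqv n \<dots> (Phi n (act_t n (H0 n) x))" using n Hsl by (rule ad_Phi)
    finally (eqv_trans) have "eqv n (Phi n (act_t n (H0 n) x)) (ad (H0 n) f)" by (rule eqv_sym)
    then have "Phi n (act_t n (H0 n) x) \<in> U_ideal n" using fH by (rule eqv_ideal)
    then show ?case by (simp add: actp)
  next
    case (Suc p)
    have "eqv n (Phi n (act_t n (H0 n) (\<lambda>i j k m. wt i j k m ^ Suc p * x i j k m)))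
       (ad (H0 n) (Phi n (\<lambda>i j k m. wt i j k m ^ Suc p * x i j k m)))"
      using ad_Phi[OF n Hsl] by (rule eqv_sym)
    moreover have "ad (H0 n) (Phi n (\<lambda>i j k m. wt i j k m ^ Suc p * x i j k m)) \<in> U_ideal n"
      using Hsl Suc by (rule ad_ideal)
    ultimately have "Phi n (act_t n (H0 n) (\<lambda>i j k m. wt i j k m ^ Suc p * x i j k m)) \<in> U_ideal n"
      by (rule eqv_ideal)
    then show ?case by (simp add: actp mult.assoc)
  qed
  define S where "S = (\<lambda>(i,j,k,m). wt i j k m) ` ({1..n} \<times> {1..n} \<times> {1..n} \<times> {1..n})"
  have finS: "finite S" unfolding S_def by simp
  have supp: "\<forall>i\<in>{1..n}. \<forall>j\<in>{1..n}. \<forall>k\<in>{1..n}. \<forall>m\<in>{1..n}. x i j k m \<noteq> 0 \<longrightarrow> wt i j k m \<in> insert 0 S"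
  proof (intro ballI impI)
    fix i j k m assume h: "i \<in> {1..n}" "j \<in> {1..n}" "k \<in> {1..n}" "m \<in> {1..n}"
    have "(i,j,k,m) \<in> {1..n} \<times> {1..n} \<times> {1..n} \<times> {1..n}" using h by simp
    then have "wt i j k m \<in> S" unfolding S_def by (rule rev_image_eqI) simp
    then show "wt i j k m \<in> insert 0 S" by simp
  qed
  have z: "Phi n (\<lambda>i j k m. if wt i j k m = 0 then 0 else x i j k m) \<in> U_ideal n"
  proof -
    have pw': "\<forall>p. Phi n (\<lambda>i j k m. wt i j k m ^ Suc p * x i j k m) \<in> U_ideal n" using pw by blast
    show ?thesis by (rule mp[OF mp[OF spec[OF extract_aux[OF finS, where n=n], of x] supp] pw'])
  qed
  have split: "Phi n x = (\<lambda>w. Phi n (\<lambda>i j k m. if wt i j k m = 0 then x i j k m else 0) w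
       + Phi n (\<lambda>i j k m. if wt i j k m = 0 then 0 else x i j k m) w)"
    unfolding Phi_add[symmetric] by (rule Phi_cong) simp
  have "eqv n f (Phi n (\<lambda>i j k m. if wt i j k m = 0 then x i j k m else 0))"
  proof -
    have "eqv n (Phi n x) (Phi n (\<lambda>i j k m. if wt i j k m = 0 then x i j k m else 0))"
      unfolding eqv_def split using z by simp
    with fx show ?thesis by (rule eqv_trans)
  qed
  then show ?thesis using Kp_x0[OF K] zw_x0 by blast
qed


definition dl :: "nat \<Rightarrow> nat \<Rightarrow> complex" where
  "dl a b = (if a = b then 1 else 0)"

lemma dl_same[simp]: "dl a a = 1" by (simp add: dl_def)
lemma dl_diff[simp]: "a \<noteq> b \<Longrightarrow> dl a b = 0" by (simp add: dl_def)

definition r2 :: "nat \<Rightarrow> nat \<Rightarrow> nat \<Rightarrow> nat \<Rightarrow> complex" where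
  "r2 a c i k = dl i a * dl k c - dl i c * dl k a"

definition mt :: "nat \<Rightarrow> nat \<Rightarrow> nat \<Rightarrow> nat \<Rightarrow> tens" where
  "mt a c b d = (\<lambda>i j k m. r2 a c i k * r2 b d j m)"

lemma rowact: "dl i p * r2 a c q k + dl k p * r2 a c i q = dl q a * r2 p c i k + dl q c * r2 a p i k"
  by (simp add: r2_def dl_def)
lemma colact: "dl q j * r2 b d p m + dl q m * r2 b d j p = dl p b * r2 q d j m + dl p d * r2 b q j m"
  by (simp add: r2_def dl_def)

lemma sum_unitm_l: "q \<in> {1..n} \<Longrightarrow> (\<Sum>s\<in>{1..n}. unitm p q i s * f s) = dl i p * f q"
  by (simp add: unitm_alt dl_def sum.delta' cong: if_cong)
lemma sum_unitm_r: "p \<in> {1..n} \<Longrightarrow> (\<Sum>s\<in>{1..n}. f s * unitm p q s j) = f p * dl q j"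
  by (simp add: unitm_alt dl_def sum.delta cong: if_cong)

lemma act_unitm:
  assumes "p \<in> {1..n}" "q \<in> {1..n}"
  shows "act_t n (unitm p q) x i j k m = dl i p * x q j k m - x i p k m * dl q j + dl k p * x i j q m - x i j k p * dl q m"
  unfolding act_t_def sum_unitm_l[OF assms(2)] sum_unitm_r[OF assms(1)] ..

lemma act_mt:
  assumes "p \<in> {1..n}" "q \<in> {1..n}"
  shows "act_t n (unitm p q) (mt a c b d) i j k m = dl q a * mt p c b d i j k m + dl q c * mt a p b d i j k m
     - dl p b * mt a c q d i j k m - dl p d * mt a c b q i j k m"
proof -
  have "act_t n (unitm p q) (mt a c b d) i j k m =
     (dl i p * r2 a c q k + dl k p * r2 a c i q) * r2 b d j m - r2 a c i k * (dl q j * r2 b d p m + dl q m * r2 b d j p)"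
    unfolding act_unitm[OF assms] mt_def by (simp add: algebra_simps)
  also have "\<dots> = (dl q a * r2 p c i k + dl q c * r2 a p i k) * r2 b d j m - r2 a c i k * (dl p b * r2 q d j m + dl p d * r2 b q j m)"
    by (subst rowact, subst colact, rule refl)
  also have "\<dots> = dl q a * mt p c b d i j k m + dl q c * mt a p b d i j k m
     - dl p b * mt a c q d i j k m - dl p d * mt a c b q i j k m"
    unfolding mt_def by (simp add: algebra_simps)
  finally show ?thesis .
qed

lemma act_t_lin: "act_t n X (\<lambda>i j k m. \<alpha> * y i j k m + \<beta> * z i j k m)
   = (\<lambda>i j k m. \<alpha> * act_t n X y i j k m + \<beta> * act_t n X z i j k m)"
  unfolding act_t_def
  by (simp add: sum.distrib sum_distrib_left algebra_simps)

lemma act_t_diff: "act_t n X (\<lambda>i j k m. y i j k m - z i j k m)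
   = (\<lambda>i j k m. act_t n X y i j k m - act_t n X z i j k m)"
  using act_t_lin[of n X 1 y "-1" z] by simp

lemma r2_swap: "r2 c a i k = - r2 a c i k" by (simp add: r2_def)
lemma mt_swap_r: "mt c a b d = (\<lambda>i j k m. (-1) * mt a c b d i j k m)" by (simp add: mt_def r2_def algebra_simps)
lemma mt_swap_c: "mt a c d b = (\<lambda>i j k m. (-1) * mt a c b d i j k m)" by (simp add: mt_def r2_def algebra_simps)

section \<open>Membership of tensor images in R\<close>

definition Kin :: "nat \<Rightarrow> fa \<Rightarrow> tens \<Rightarrow> bool" where
  "Kin n v z \<longleftrightarrow> Phi n z \<in> R_pre n v"

lemma R_pre_diff: "f \<in> R_pre n v \<Longrightarrow> g \<in> R_pre n v \<Longrightarrow> (\<lambda>w. f w - g w) \<in> R_pre n v"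
proof -
  assume f: "f \<in> R_pre n v" and g: "g \<in> R_pre n v"
  have "(\<lambda>w. (-1) * g w) \<in> R_pre n v" using g by (rule R_pre.smult)
  from R_pre.add[OF f this] show ?thesis by simp
qed

lemma Kin_act:
  assumes n: "n \<ge> 1" and X: "X \<in> sl n" and K: "Kin n v z"
  shows "Kin n v (act_t n X z)"
proof -
  have a: "ad X (Phi n z) \<in> R_pre n v" using K X unfolding Kin_def by (intro R_pre.adj)
  have b: "(\<lambda>w. ad X (Phi n z) w - Phi n (act_t n X z) w) \<in> R_pre n v"
    using ad_Phi[OF n X, of z] unfolding eqv_def by (rule R_pre.ideal)
  have "(\<lambda>w. ad X (Phi n z) w - (ad X (Phi n z) w - Phi n (act_t n X z) w)) \<in> R_pre n v"
    using a b by (rule R_pre_diff)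
  then show ?thesis unfolding Kin_def by simp
qed

lemma Kin_cong:
  assumes "Kin n v z" "\<And>i j k m. i \<in> {1..n} \<Longrightarrow> j \<in> {1..n} \<Longrightarrow> k \<in> {1..n} \<Longrightarrow> m \<in> {1..n} \<Longrightarrow> z i j k m = z' i j k m"
  shows "Kin n v z'"
  using assms Phi_cong[of n z z'] unfolding Kin_def by metis

lemma Kin_lin: "Kin n v y \<Longrightarrow> Kin n v z \<Longrightarrow> Kin n v (\<lambda>i j k m. \<alpha> * y i j k m + \<beta> * z i j k m)"
  unfolding Kin_def Phi_add Phi_smult by (intro R_pre.add R_pre.smult)

lemma Kin_smult: "Kin n v y \<Longrightarrow> Kin n v (\<lambda>i j k m. \<alpha> * y i j k m)"
  unfolding Kin_def Phi_smult by (intro R_pre.smult)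

lemma Kin_eq: "Kin n v y \<Longrightarrow> y = z \<Longrightarrow> Kin n v z" by simp

context
  fixes n :: nat and v :: fa
  assumes n: "n \<ge> 1"
begin

lemma Kin_act_mt:
  assumes K: "Kin n v (mt a c b d)" and pq: "p \<in> {1..n}" "q \<in> {1..n}" "p \<noteq> q"
  shows "Kin n v (\<lambda>i j k m. dl q a * mt p c b d i j k m + dl q c * mt a p b d i j k m
     - dl p b * mt a c q d i j k m - dl p d * mt a c b q i j k m)"
  using Kin_act[OF n unitm_sl[OF pq] K] by (rule Kin_cong) (simp add: act_mt[OF pq(1,2)])

lemma Kin_neg_r: "Kin n v (mt a c b d) \<Longrightarrow> Kin n v (mt c a b d)"
  by (rule Kin_eq[OF Kin_smult[of n v "mt a c b d" "-1"]]) (simp_all only: mt_swap_r[of c a b d])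
lemma Kin_neg_c: "Kin n v (mt a c b d) \<Longrightarrow> Kin n v (mt a c d b)"
  by (rule Kin_eq[OF Kin_smult[of n v "mt a c b d" "-1"]]) (simp_all only: mt_swap_c[of a c d b])

lemma Kin_relabel_r:
  assumes K: "Kin n v (mt a c b d)" and box: "a \<in> {1..n}" "x \<in> {1..n}"
    and d: "a \<noteq> c" "x \<noteq> a" "x \<noteq> b" "x \<noteq> d"
  shows "Kin n v (mt x c b d)"
proof -
  have "Kin n v (\<lambda>i j k m. dl a a * mt x c b d i j k m + dl a c * mt a x b d i j k m
     - dl x b * mt a c a d i j k m - dl x d * mt a c b a i j k m)"
    using K box d by (intro Kin_act_mt) auto
  then show ?thesis using d by (simp add: dl_def)
qed

lemma Kin_relabel_c:
  assumes K: "Kin n v (mt a c b d)" and box: "b \<in> {1..n}" "x \<in> {1..n}"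
    and d: "b \<noteq> d" "x \<noteq> a" "x \<noteq> c" "x \<noteq> b"
  shows "Kin n v (mt a c x d)"
proof -
  have "Kin n v (\<lambda>i j k m. dl x a * mt b c b d i j k m + dl x c * mt a b b d i j k m
     - dl b b * mt a c x d i j k m - dl b d * mt a c b x i j k m)"
    using K box d by (intro Kin_act_mt) auto
  then have "Kin n v (\<lambda>i j k m. (-1) * mt a c x d i j k m)" using d by (simp add: dl_def)
  from Kin_smult[OF this, of "-1"] show ?thesis by simp
qed

lemma Kin_swap:
  assumes K: "Kin n v (mt a c b d)" and box: "b \<in> {1..n}" "c \<in> {1..n}"
    and d: "a \<noteq> c" "a \<noteq> b" "b \<noteq> c" "b \<noteq> d" "c \<noteq> d"
  shows "Kin n v (mt a b c d)"
proof -
  have "Kin n v (\<lambda>i j k m. dl c a * mt b c b d i j k m + dl c c * mt a b b d i j k m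
     - dl b b * mt a c c d i j k m - dl b d * mt a c b c i j k m)"
    using K box d by (intro Kin_act_mt) auto
  then have K1: "Kin n v (\<lambda>i j k m. 1 * mt a b b d i j k m + (-1) * mt a c c d i j k m)"
    using d by (simp add: dl_def)
  have K2: "Kin n v (act_t n (unitm b c) (\<lambda>i j k m. 1 * mt a b b d i j k m + (-1) * mt a c c d i j k m))"
    using box d by (intro Kin_act[OF n] K1 unitm_sl) auto
  have "Kin n v (\<lambda>i j k m. (-2) * mt a b c d i j k m)"
    using K2 unfolding act_t_lin
    by (rule Kin_cong) (use box d in \<open>simp add: act_mt dl_def\<close>)
  from Kin_smult[OF this, of "-1/2"] show ?thesis by simp
qed

definition Yt :: "nat \<Rightarrow> nat \<Rightarrow> nat \<Rightarrow> nat \<Rightarrow> tens" where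
  "Yt a c b d = (\<lambda>i j k m. mt b d b d i j k m - mt b c b c i j k m - mt a d a d i j k m + mt a c a c i j k m)"

lemma Kin_cycle:
  assumes K: "Kin n v (mt a c b d)" and box: "a \<in> {1..n}" "b \<in> {1..n}" "c \<in> {1..n}" "d \<in> {1..n}"
    and d: "a \<noteq> c" "a \<noteq> b" "a \<noteq> d" "b \<noteq> c" "b \<noteq> d" "c \<noteq> d"
  shows "Kin n v (Yt a c b d)"
proof -
  have "Kin n v (\<lambda>i j k m. dl a a * mt b c b d i j k m + dl a c * mt a b b d i j k m
     - dl b b * mt a c a d i j k m - dl b d * mt a c b a i j k m)"
    using K box d by (intro Kin_act_mt) auto
  then have K1: "Kin n v (\<lambda>i j k m. 1 * mt b c b d i j k m + (-1) * mt a c a d i j k m)"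
    using d by (simp add: dl_def)
  have K2: "Kin n v (act_t n (unitm d c) (\<lambda>i j k m. 1 * mt b c b d i j k m + (-1) * mt a c a d i j k m))"
    using box d by (intro Kin_act[OF n] K1 unitm_sl) auto
  show ?thesis
    using K2 unfolding act_t_lin
    by (rule Kin_cong) (use box d in \<open>simp add: act_mt dl_def Yt_def\<close>)
qed

end


section \<open>A representation on 2-tensors\<close>

type_synonym vec2 = "nat \<Rightarrow> nat \<Rightarrow> complex"

definition fs :: "fa \<Rightarrow> bool" where "fs f \<longleftrightarrow> finite {w. f w \<noteq> 0}"

definition rho :: "nat \<Rightarrow> cmat \<Rightarrow> vec2 \<Rightarrow> vec2" where
  "rho n A u = (\<lambda>i j. (\<Sum>p\<in>{1..n}. A i p * u p j) + (\<Sum>q\<in>{1..n}. A j q * u i q))"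

primrec aw :: "nat \<Rightarrow> cmat list \<Rightarrow> vec2 \<Rightarrow> vec2" where
  "aw n [] u = u"
| "aw n (A # ws) u = rho n A (aw n ws u)"

definition act_f :: "nat \<Rightarrow> fa \<Rightarrow> vec2 \<Rightarrow> vec2" where
  "act_f n f u = (\<lambda>i j. \<Sum>w\<in>{w. f w \<noteq> 0}. f w * aw n w u i j)"

lemma rho_sum: "rho n A (\<lambda>i j. \<Sum>s\<in>S. c s * U s i j) = (\<lambda>i j. \<Sum>s\<in>S. c s * rho n A (U s) i j)"
  unfolding rho_def
  by (intro ext) (simp add: sum_distrib_left distrib_left sum.distrib mult.left_commute sum.swap[of _ S])

lemma aw_sum: "aw n ws (\<lambda>i j. \<Sum>s\<in>S. c s * U s i j) = (\<lambda>i j. \<Sum>s\<in>S. c s * aw n ws (U s) i j)"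
  by (induction ws) (simp_all add: rho_sum)

lemma aw_zero: "aw n ws (\<lambda>i j. 0) = (\<lambda>i j. 0)"
  using aw_sum[where S="{}" and n=n and ws=ws] by simp

lemma aw_append: "aw n (u @ v) x = aw n u (aw n v x)"
  by (induction u) simp_all

lemma rho_mat_lin: "rho n (\<lambda>a b. c * A a b + d * B a b) u = (\<lambda>i j. c * rho n A u i j + d * rho n B u i j)"
  unfolding rho_def by (intro ext) (simp add: algebra_simps sum.distrib sum_distrib_left)

lemma mm_assoc: "(\<Sum>p\<in>S. a p * (\<Sum>q\<in>T. b p q * (u q::complex))) = (\<Sum>q\<in>T. (\<Sum>p\<in>S. a p * b p q) * u q)"
proof -
  have "(\<Sum>p\<in>S. a p * (\<Sum>q\<in>T. b p q * u q)) = (\<Sum>p\<in>S. \<Sum>q\<in>T. a p * b p q * u q)"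
    by (simp add: sum_distrib_left mult.assoc)
  also have "\<dots> = (\<Sum>q\<in>T. \<Sum>p\<in>S. a p * b p q * u q)" by (rule sum.swap)
  also have "\<dots> = (\<Sum>q\<in>T. (\<Sum>p\<in>S. a p * b p q) * u q)" by (simp add: sum_distrib_right)
  finally show ?thesis .
qed

lemma rho_comm:
  "rho n A (rho n B u) i j - rho n B (rho n A u) i j = rho n (mbr n A B) u i j"
proof -
  let ?S = "{1..n}"
  have e1: "(\<Sum>p\<in>?S. A i p * (\<Sum>p'\<in>?S. B p p' * u p' j)) - (\<Sum>p\<in>?S. B i p * (\<Sum>p'\<in>?S. A p p' * u p' j))
      = (\<Sum>p'\<in>?S. mbr n A B i p' * u p' j)"
    unfolding mm_assoc mbr_def mmul_def by (simp add: left_diff_distrib sum_subtractf)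
  have e2: "(\<Sum>q\<in>?S. A j q * (\<Sum>q'\<in>?S. B q q' * u i q')) - (\<Sum>q\<in>?S. B j q * (\<Sum>q'\<in>?S. A q q' * u i q'))
      = (\<Sum>q'\<in>?S. mbr n A B j q' * u i q')"
    unfolding mm_assoc mbr_def mmul_def by (simp add: left_diff_distrib sum_subtractf)
  have e3: "(\<Sum>p\<in>?S. A i p * (\<Sum>q\<in>?S. B j q * u p q)) = (\<Sum>q\<in>?S. B j q * (\<Sum>p\<in>?S. A i p * u p q))"
  proof -
    have "(\<Sum>p\<in>?S. A i p * (\<Sum>q\<in>?S. B j q * u p q)) = (\<Sum>p\<in>?S. \<Sum>q\<in>?S. B j q * (A i p * u p q))"
      by (simp add: sum_distrib_left mult.left_commute)
    also have "\<dots> = (\<Sum>q\<in>?S. \<Sum>p\<in>?S. B j q * (A i p * u p q))" by (rule sum.swap)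
    also have "\<dots> = (\<Sum>q\<in>?S. B j q * (\<Sum>p\<in>?S. A i p * u p q))" by (simp add: sum_distrib_left)
    finally show ?thesis .
  qed
  have e4: "(\<Sum>q\<in>?S. A j q * (\<Sum>p\<in>?S. B i p * u p q)) = (\<Sum>p\<in>?S. B i p * (\<Sum>q\<in>?S. A j q * u p q))"
  proof -
    have "(\<Sum>q\<in>?S. A j q * (\<Sum>p\<in>?S. B i p * u p q)) = (\<Sum>q\<in>?S. \<Sum>p\<in>?S. B i p * (A j q * u p q))"
      by (simp add: sum_distrib_left mult.left_commute)
    also have "\<dots> = (\<Sum>p\<in>?S. \<Sum>q\<in>?S. B i p * (A j q * u p q))" by (rule sum.swap)
    also have "\<dots> = (\<Sum>p\<in>?S. B i p * (\<Sum>q\<in>?S. A j q * u p q))" by (simp add: sum_distrib_left)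
    finally show ?thesis .
  qed
  have "rho n A (rho n B u) i j - rho n B (rho n A u) i j =
      ((\<Sum>p\<in>?S. A i p * (\<Sum>p'\<in>?S. B p p' * u p' j)) - (\<Sum>p\<in>?S. B i p * (\<Sum>p'\<in>?S. A p p' * u p' j)))
    + ((\<Sum>q\<in>?S. A j q * (\<Sum>q'\<in>?S. B q q' * u i q')) - (\<Sum>q\<in>?S. B j q * (\<Sum>q'\<in>?S. A q q' * u i q')))
    + ((\<Sum>p\<in>?S. A i p * (\<Sum>q\<in>?S. B j q * u p q)) - (\<Sum>q\<in>?S. B j q * (\<Sum>p\<in>?S. A i p * u p q)))
    + ((\<Sum>q\<in>?S. A j q * (\<Sum>p\<in>?S. B i p * u p q)) - (\<Sum>p\<in>?S. B i p * (\<Sum>q\<in>?S. A j q * u p q)))"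
    unfolding rho_def by (simp add: distrib_left sum.distrib)
  also have "\<dots> = rho n (mbr n A B) u i j"
    unfolding e1 e2 e3 e4 rho_def by simp
  finally show ?thesis .
qed


section \<open>Finite support and the action of the free algebra\<close>

lemma fs_gw[simp]: "fs (gw ws)"
proof -
  have "{w. gw ws w \<noteq> 0} = {ws}" by (auto simp: gw_def)
  then show ?thesis by (simp add: fs_def)
qed

lemma fs_add[simp]: "fs f \<Longrightarrow> fs g \<Longrightarrow> fs (\<lambda>w. f w + g w)"
  unfolding fs_def by (rule finite_subset[of _ "{w. f w \<noteq> 0} \<union> {w. g w \<noteq> 0}"]) auto
lemma fs_smult[simp]: "fs f \<Longrightarrow> fs (\<lambda>w. c * f w)"
  unfolding fs_def by (rule finite_subset[of _ "{w. f w \<noteq> 0}"]) auto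
lemma fs_diff[simp]: "fs f \<Longrightarrow> fs g \<Longrightarrow> fs (\<lambda>w. f w - g w)"
  unfolding fs_def by (rule finite_subset[of _ "{w. f w \<noteq> 0} \<union> {w. g w \<noteq> 0}"]) auto
lemma fs_zero[simp]: "fs (\<lambda>w. 0)" by (simp add: fs_def)

lemma fs_sum1[simp]: "finite S \<Longrightarrow> \<forall>s\<in>S. fs (F s) \<Longrightarrow> fs (\<lambda>w. \<Sum>s\<in>S. F s w)"
proof (induction S rule: finite_induct)
  case empty then show ?case by simp
next
  case (insert x S)
  have "fs (\<lambda>w. F x w + (\<Sum>s\<in>S. F s w))" using insert by (intro fs_add) auto
  then show ?case using insert by simp
qed

lemma fs_mult[simp]: "fs f \<Longrightarrow> fs g \<Longrightarrow> fs (fa_mult f g)"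
proof -
  assume f: "fs f" and g: "fs g"
  have "{w. fa_mult f g w \<noteq> 0} \<subseteq> (\<lambda>(a,b). a @ b) ` ({w. f w \<noteq> 0} \<times> {w. g w \<noteq> 0})"
  proof
    fix w assume "w \<in> {w. fa_mult f g w \<noteq> 0}"
    then have "(\<Sum>i\<le>length w. f (take i w) * g (drop i w)) \<noteq> 0" by (simp add: fa_mult_def)
    then obtain i where "f (take i w) * g (drop i w) \<noteq> 0" using sum.not_neutral_contains_not_neutral by blast
    then show "w \<in> (\<lambda>(a,b). a @ b) ` ({w. f w \<noteq> 0} \<times> {w. g w \<noteq> 0})"
      by (intro image_eqI[of _ _ "(take i w, drop i w)"]) auto
  qed
  moreover have "finite ((\<lambda>(a,b). a @ b) ` ({w. f w \<noteq> 0} \<times> {w. g w \<noteq> 0}))"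
    using f g by (simp add: fs_def)
  ultimately show ?thesis unfolding fs_def by (rule finite_subset)
qed

lemma fs_carrier: "f \<in> fa_carrier n \<Longrightarrow> fs f"
  by (simp add: fa_carrier_def fs_def)

lemma act_f_sup:
  assumes "finite S" "{w. f w \<noteq> 0} \<subseteq> S"
  shows "act_f n f u i j = (\<Sum>w\<in>S. f w * aw n w u i j)"
  unfolding act_f_def using assms by (intro sum.mono_neutral_left) auto

lemma act_f_lin:
  assumes f: "fs f" and g: "fs g"
  shows "act_f n (\<lambda>w. \<alpha> * f w + \<beta> * g w) u i j = \<alpha> * act_f n f u i j + \<beta> * act_f n g u i j"
proof -
  let ?S = "{w. f w \<noteq> 0} \<union> {w. g w \<noteq> 0}"
  have fin: "finite ?S" using f g by (simp add: fs_def)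
  have "act_f n (\<lambda>w. \<alpha> * f w + \<beta> * g w) u i j = (\<Sum>w\<in>?S. (\<alpha> * f w + \<beta> * g w) * aw n w u i j)"
    using fin by (intro act_f_sup) auto
  also have "\<dots> = \<alpha> * (\<Sum>w\<in>?S. f w * aw n w u i j) + \<beta> * (\<Sum>w\<in>?S. g w * aw n w u i j)"
    by (simp add: algebra_simps sum.distrib sum_distrib_left)
  also have "(\<Sum>w\<in>?S. f w * aw n w u i j) = act_f n f u i j"
    using fin by (intro act_f_sup[symmetric]) auto
  also have "(\<Sum>w\<in>?S. g w * aw n w u i j) = act_f n g u i j"
    using fin by (intro act_f_sup[symmetric]) auto
  finally show ?thesis .
qed

lemma act_f_smult: "fs f \<Longrightarrow> act_f n (\<lambda>w. c * f w) u i j = c * act_f n f u i j"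
  using act_f_lin[of f f n c 0 u i j] by simp

lemma act_f_add: "fs f \<Longrightarrow> fs g \<Longrightarrow> act_f n (\<lambda>w. f w + g w) u i j = act_f n f u i j + act_f n g u i j"
  using act_f_lin[of f g n 1 1 u i j] by simp

lemma act_f_sum1:
  assumes "finite S" "\<forall>s\<in>S. fs (F s)"
  shows "act_f n (\<lambda>w. \<Sum>s\<in>S. F s w) u i j = (\<Sum>s\<in>S. act_f n (F s) u i j)"
  using assms
proof (induction S rule: finite_induct)
  case empty
  show ?case by (simp add: act_f_def)
next
  case (insert x S)
  have "act_f n (\<lambda>w. F x w + (\<Sum>s\<in>S. F s w)) u i j = act_f n (F x) u i j + act_f n (\<lambda>w. \<Sum>s\<in>S. F s w) u i j"
    using insert by (intro act_f_add) auto
  then show ?case using insert by simp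
qed

lemma act_f_gw: "act_f n (gw ws) u i j = aw n ws u i j"
  by (subst act_f_sup[of "{ws}"]) (auto simp: gw_def)

lemma act_f_zero_vec: "act_f n f (\<lambda>i j. 0) i j = 0"
  unfolding act_f_def aw_zero by simp

lemma f_expand: "fs f \<Longrightarrow> (\<lambda>w. \<Sum>a\<in>{w. f w \<noteq> 0}. f a * gw a w) = f"
proof (rule ext)
  fix w assume f: "fs f"
  have "(\<Sum>a\<in>{w. f w \<noteq> 0}. f a * gw a w) = (\<Sum>a\<in>{w. f w \<noteq> 0}. if a = w then f w else 0)"
    by (rule sum.cong) (auto simp: gw_def)
  also have "\<dots> = f w" using f by (simp add: fs_def)
  finally show "(\<Sum>a\<in>{w. f w \<noteq> 0}. f a * gw a w) = f w" .
qed

lemma act_f_mult: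
  assumes f: "fs f" and g: "fs g"
  shows "act_f n (fa_mult f g) u i j = act_f n f (act_f n g u) i j"
proof -
  define Sf where "Sf = {w. f w \<noteq> 0}"
  define Sg where "Sg = {w. g w \<noteq> 0}"
  have finf: "finite Sf" and fing: "finite Sg" using f g by (simp_all add: fs_def Sf_def Sg_def)
  have ef: "(\<lambda>w. \<Sum>a\<in>Sf. f a * gw a w) = f" unfolding Sf_def using f by (rule f_expand)
  have eg: "(\<lambda>w. \<Sum>b\<in>Sg. g b * gw b w) = g" unfolding Sg_def using g by (rule f_expand)
  have "fa_mult f g = fa_mult (\<lambda>w. \<Sum>a\<in>Sf. f a * gw a w) (\<lambda>w. \<Sum>b\<in>Sg. g b * gw b w)"
    unfolding ef eg ..
  also have "\<dots> = (\<lambda>w. \<Sum>a\<in>Sf. f a * (\<Sum>b\<in>Sg. g b * gw (a @ b) w))"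
    unfolding fa_mult_sum_left fa_mult_smult_left fa_mult_sum_right fa_mult_smult_right fa_mult_gw ..
  finally have e: "fa_mult f g = (\<lambda>w. \<Sum>a\<in>Sf. f a * (\<Sum>b\<in>Sg. g b * gw (a @ b) w))" .
  have "act_f n (fa_mult f g) u i j = (\<Sum>a\<in>Sf. act_f n (\<lambda>w. f a * (\<Sum>b\<in>Sg. g b * gw (a @ b) w)) u i j)"
    unfolding e using finf fing by (intro act_f_sum1) auto
  also have "\<dots> = (\<Sum>a\<in>Sf. f a * (\<Sum>b\<in>Sg. g b * aw n (a @ b) u i j))"
  proof (rule sum.cong[OF refl])
    fix a
    have "act_f n (\<lambda>w. f a * (\<Sum>b\<in>Sg. g b * gw (a @ b) w)) u i j = f a * act_f n (\<lambda>w. \<Sum>b\<in>Sg. g b * gw (a @ b) w) u i j"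
      using fing by (intro act_f_smult) auto
    also have "act_f n (\<lambda>w. \<Sum>b\<in>Sg. g b * gw (a @ b) w) u i j = (\<Sum>b\<in>Sg. act_f n (\<lambda>w. g b * gw (a @ b) w) u i j)"
      using fing by (intro act_f_sum1) auto
    also have "\<dots> = (\<Sum>b\<in>Sg. g b * aw n (a @ b) u i j)"
      by (simp add: act_f_smult act_f_gw)
    finally show "act_f n (\<lambda>w. f a * (\<Sum>b\<in>Sg. g b * gw (a @ b) w)) u i j = f a * (\<Sum>b\<in>Sg. g b * aw n (a @ b) u i j)" .
  qed
  also have "\<dots> = act_f n f (act_f n g u) i j"
  proof -
    have ag: "act_f n g u = (\<lambda>i j. \<Sum>b\<in>Sg. g b * aw n b u i j)" unfolding act_f_def Sg_def ..
    have "act_f n f (act_f n g u) i j = (\<Sum>a\<in>Sf. f a * aw n a (act_f n g u) i j)"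
      using finf by (intro act_f_sup) (auto simp: Sf_def)
    then show ?thesis unfolding ag aw_sum aw_append by simp
  qed
  finally show ?thesis .
qed


lemma fs_fa_gen[simp]: "fs (fa_gen A)" by (simp add: fa_gen_gw)

lemma I_act0: "f \<in> U_ideal n \<Longrightarrow> fs f \<and> (\<forall>u i j. act_f n f u i j = 0)"
proof (induction rule: U_ideal.induct)
  case (rel_lin A B c d)
  let ?M = "\<lambda>a b. c * A a b + d * B a b"
  have e: "lin_rel A B c d = (\<lambda>w. 1 * gw [?M] w + (-1) * (\<lambda>w. c * gw [A] w + d * gw [B] w) w)"
    by (rule ext) (simp add: lin_rel_def fa_gen_gw)
  have "act_f n (lin_rel A B c d) u i j = 0" for u i j
    unfolding e act_f_lin[OF fs_gw fs_add[OF fs_smult[OF fs_gw] fs_smult[OF fs_gw]]]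
      act_f_lin[OF fs_gw fs_gw] act_f_gw
    by (simp add: rho_mat_lin)
  moreover have "fs (lin_rel A B c d)" unfolding e by (intro fs_add fs_smult fs_gw)
  ultimately show ?case by blast
next
  case (rel_br A B)
  have e: "br_rel n A B = (\<lambda>w. 1 * gw [A, B] w + (-1) * (\<lambda>w. 1 * gw [B, A] w + 1 * gw [mbr n A B] w) w)"
    by (rule ext) (simp add: br_rel_def fa_gen_gw fa_mult_gw)
  have "act_f n (br_rel n A B) u i j = 0" for u i j
  proof -
    have "act_f n (br_rel n A B) u i j = rho n A (rho n B u) i j - rho n B (rho n A u) i j - rho n (mbr n A B) u i j"
      unfolding e act_f_lin[OF fs_gw fs_add[OF fs_smult[OF fs_gw] fs_smult[OF fs_gw]]]
        act_f_lin[OF fs_gw fs_gw] act_f_gw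
      by simp
    then show ?thesis by (simp add: rho_comm)
  qed
  moreover have "fs (br_rel n A B)" unfolding e by (intro fs_add fs_smult fs_gw)
  ultimately show ?case by blast
next
  case zero
  show ?case by (simp add: act_f_def)
next
  case (add f g)
  then show ?case by (simp add: act_f_add)
next
  case (smult f c)
  then show ?case by (simp add: act_f_smult)
next
  case (lmult f g)
  have g: "fs g" using lmult by (simp add: fs_carrier)
  have "act_f n (fa_mult g f) u i j = 0" for u i j
  proof -
    have "act_f n (fa_mult g f) u i j = act_f n g (act_f n f u) i j"
      using g lmult by (intro act_f_mult) auto
    also have "act_f n f u = (\<lambda>i j. 0)" using lmult by (auto intro!: ext)
    finally show ?thesis by (simp add: act_f_zero_vec)
  qed
  then show ?case using lmult g by simp
next
  case (rmult f g)
  have g: "fs g" using rmult by (simp add: fs_carrier)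
  have "act_f n (fa_mult f g) u i j = 0" for u i j
  proof -
    have "act_f n (fa_mult f g) u i j = act_f n f (act_f n g u) i j"
      using g rmult by (intro act_f_mult) auto
    then show ?thesis using rmult by simp
  qed
  then show ?case using rmult g by simp
qed

lemma rho_unitm:
  assumes "p \<in> {1..n}" "q \<in> {1..n}"
  shows "rho n M (unitm p q) a b = M a p * dl b q + M b q * dl a p"
proof -
  have 1: "(\<Sum>t\<in>{1..n}. M a t * unitm p q t b) = M a p * dl b q"
    using assms by (simp add: unitm_alt dl_def sum.delta' cong: if_cong)
  have 2: "(\<Sum>t\<in>{1..n}. M b t * unitm p q a t) = M b q * dl a p"
    using assms by (simp add: unitm_alt dl_def sum.delta' cong: if_cong)
  show ?thesis unfolding rho_def 1 2 ..
qed

lemma aw2_unitm: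
  assumes pq: "p \<in> {1..n}" "q \<in> {1..n}" "p \<noteq> q"
  shows "aw n [N, M] (unitm p q) q p = N q p * M p q + N p q * M q p"
proof -
  have "aw n [N, M] (unitm p q) q p = (\<Sum>s\<in>{1..n}. N q s * rho n M (unitm p q) s p) + (\<Sum>t\<in>{1..n}. N p t * rho n M (unitm p q) q t)"
    by (simp add: rho_def)
  also have "(\<Sum>s\<in>{1..n}. N q s * rho n M (unitm p q) s p) = (\<Sum>s\<in>{1..n}. N q s * (M p q * dl s p))"
    using pq by (simp add: rho_unitm[OF pq(1,2)])
  also have "\<dots> = N q p * M p q"
    using pq by (simp add: dl_def sum.delta' cong: if_cong)
  also have "(\<Sum>t\<in>{1..n}. N p t * rho n M (unitm p q) q t) = (\<Sum>t\<in>{1..n}. N p t * (M q p * dl t q))"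
    using pq by (simp add: rho_unitm[OF pq(1,2)])
  also have "\<dots> = N p q * M q p"
    using pq by (simp add: dl_def sum.delta' cong: if_cong)
  finally show ?thesis .
qed

lemma eh_off: "a \<noteq> b \<Longrightarrow> eh n i j a b = dl a i * dl b j"
  by (simp add: eh_def idm_def unitm_def dl_def)

lemma act_f_Phi:
  "act_f n (Phi n x) u a b = (\<Sum>i\<in>{1..n}. \<Sum>j\<in>{1..n}. \<Sum>k\<in>{1..n}. \<Sum>m\<in>{1..n}. x i j k m * aw n [eh n i j, eh n k m] u a b)"
  unfolding Phi_def
  by (simp add: act_f_sum1 act_f_smult act_f_gw)

lemma sum4_delta:
  assumes "a \<in> {1..n}" "b \<in> {1..n}" "c \<in> {1..n}" "d \<in> {1..n}"
  shows "(\<Sum>i\<in>{1..n}. \<Sum>j\<in>{1..n}. \<Sum>k\<in>{1..n}. \<Sum>m\<in>{1..n}. x i j k m * (dl a i * dl b j * dl c k * dl d m)) = x a b c d"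
  using assms by (simp add: dl_def sum.delta cong: if_cong)

lemma L_Phi:
  assumes pq: "p \<in> {1..n}" "q \<in> {1..n}" "p \<noteq> q"
  shows "act_f n (Phi n x) (unitm p q) q p = x q p p q + x p q q p"
proof -
  have "act_f n (Phi n x) (unitm p q) q p = (\<Sum>i\<in>{1..n}. \<Sum>j\<in>{1..n}. \<Sum>k\<in>{1..n}. \<Sum>m\<in>{1..n}.
      x i j k m * (dl q i * dl p j * dl p k * dl q m) + x i j k m * (dl p i * dl q j * dl q k * dl p m))"
    unfolding act_f_Phi aw2_unitm[OF pq] eh_off[OF pq(3)] eh_off[OF pq(3)[symmetric]]
    by (simp add: algebra_simps)
  also have "\<dots> = x q p p q + x p q q p"
    unfolding sum.distrib sum4_delta[OF pq(2) pq(1) pq(1) pq(2)] sum4_delta[OF pq(1) pq(2) pq(2) pq(1)] ..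
  finally show ?thesis .
qed


lemma Yt_eq: "Yt a c b d = (\<lambda>i j k m. mt b d b d i j k m - mt b c b c i j k m - mt a d a d i j k m + mt a c a c i j k m)"
  using Yt_def[of 1] by simp

definition Ed :: "nat \<Rightarrow> nat \<Rightarrow> nat \<Rightarrow> nat \<Rightarrow> complex" where
  "Ed a c i k = dl i a * dl k c + dl i c * dl k a"

lemma mt_diag: "a \<noteq> c \<Longrightarrow> mt a c a c i i k k = Ed a c i k"
  by (simp add: mt_def r2_def Ed_def dl_def)

lemma Yt_diag: "a \<noteq> c \<Longrightarrow> a \<noteq> d \<Longrightarrow> b \<noteq> c \<Longrightarrow> b \<noteq> d \<Longrightarrow>
  Yt a c b d i i k k = Ed b d i k - Ed b c i k - Ed a d i k + Ed a c i k"
  by (simp add: Yt_eq mt_diag)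

lemma mt_a13: "mt a c b d k j i m = - mt a c b d i j k m"
  by (simp add: mt_def r2_def algebra_simps)
lemma mt_a24: "mt a c b d i m k j = - mt a c b d i j k m"
  by (simp add: mt_def r2_def algebra_simps)

lemma mt_contr:
  assumes "p \<in> {1..n}" "q \<in> {1..n}" "p \<noteq> q"
  shows "(\<Sum>i\<in>{1..n}. mt p q p q i i k m) = dl k q * dl m q + dl k p * dl m p"
proof -
  have "(\<Sum>i\<in>{1..n}. mt p q p q i i k m) = (\<Sum>i\<in>{1..n}. (if i = p then dl k q * dl m q else 0) + (if i = q then dl k p * dl m p else 0))"
    by (rule sum.cong) (auto simp: mt_def r2_def dl_def assms)
  also have "\<dots> = dl k q * dl m q + dl k p * dl m p"
    using assms by (simp add: sum.distrib)
  finally show ?thesis .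
qed

lemma Kp_Yt:
  assumes "a \<in> {1..n}" "b \<in> {1..n}" "c \<in> {1..n}" "d \<in> {1..n}"
    "a \<noteq> c" "a \<noteq> b" "a \<noteq> d" "b \<noteq> c" "b \<noteq> d" "c \<noteq> d"
  shows "Kp n (Yt a c b d)"
proof (rule KpI)
  fix i j k m
  show "Yt a c b d k j i m = - Yt a c b d i j k m" unfolding Yt_eq mt_a13[of _ _ _ _ k j i m] by simp
  show "Yt a c b d i m k j = - Yt a c b d i j k m" unfolding Yt_eq mt_a24[of _ _ _ _ i m k j] by simp
next
  fix k m
  show "(\<Sum>i\<in>{1..n}. Yt a c b d i i k m) = 0"
    unfolding Yt_eq sum.distrib sum_subtractf mt_contr[OF assms(2) assms(4) assms(9)]
      mt_contr[OF assms(2) assms(3) assms(8)] mt_contr[OF assms(1) assms(4) assms(7)] mt_contr[OF assms(1) assms(3) assms(5)]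
    by simp
qed

lemma zw_mt: "mt p q p q i j k m \<noteq> 0 \<Longrightarrow> (i = j \<and> k = m) \<or> (i = m \<and> k = j)"
  by (auto simp: mt_def r2_def dl_def split: if_splits)

lemma zw_mt0: "\<not> ((i = j \<and> k = m) \<or> (i = m \<and> k = j)) \<Longrightarrow> mt p q p q i j k m = 0"
  using zw_mt by blast

lemma zw_Yt: "zw n (Yt a c b d)"
  unfolding zw_def Yt_eq
proof (intro ballI impI)
  fix i j k m
  assume nz: "mt b d b d i j k m - mt b c b c i j k m - mt a d a d i j k m + mt a c a c i j k m \<noteq> 0"
  show "i = j \<and> k = m \<or> i = m \<and> k = j"
  proof (rule ccontr)
    assume h: "\<not> (i = j \<and> k = m \<or> i = m \<and> k = j)"
    then show False using nz zw_mt0[OF h] by simp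
  qed
qed

lemma Kp_sum: "finite S \<Longrightarrow> (\<And>J. J \<in> S \<Longrightarrow> Kp n (Y J)) \<Longrightarrow> Kp n (\<lambda>i j k m. \<Sum>J\<in>S. c J * Y J i j k m)"
proof (induction S rule: finite_induct)
  case empty then show ?case using Kp_zero by simp
next
  case (insert x S)
  have "Kp n (\<lambda>i j k m. 1 * (c x * Y x i j k m) + 1 * (\<Sum>J\<in>S. c J * Y J i j k m))"
    using insert by (intro Kp_add[unfolded mult_1] Kp_smult) auto
  then show ?case using insert by simp
qed

lemma Kp_diff: "Kp n x \<Longrightarrow> Kp n y \<Longrightarrow> Kp n (\<lambda>i j k m. x i j k m - y i j k m)"
  using Kp_add[of n x "\<lambda>i j k m. (-1) * y i j k m"] Kp_smult[of n y "-1"] by simp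

lemma zw_lin: "zw n x \<Longrightarrow> zw n y \<Longrightarrow> zw n (\<lambda>i j k m. x i j k m - y i j k m)"
  unfolding zw_def by (metis diff_zero)

lemma zw_sum: "finite S \<Longrightarrow> (\<And>J. J \<in> S \<Longrightarrow> zw n (Y J)) \<Longrightarrow> zw n (\<lambda>i j k m. \<Sum>J\<in>S. c J * Y J i j k m)"
  unfolding zw_def
proof (intro ballI impI)
  fix i j k m
  assume fin: "finite S" and z: "\<And>J. J \<in> S \<Longrightarrow> \<forall>i\<in>{1..n}. \<forall>j\<in>{1..n}. \<forall>k\<in>{1..n}. \<forall>m\<in>{1..n}. Y J i j k m \<noteq> 0 \<longrightarrow> i = j \<and> k = m \<or> i = m \<and> k = j"
    and h: "i \<in> {1..n}" "j \<in> {1..n}" "k \<in> {1..n}" "m \<in> {1..n}" and nz: "(\<Sum>J\<in>S. c J * Y J i j k m) \<noteq> 0"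
  obtain J where "J \<in> S" "c J * Y J i j k m \<noteq> 0" using nz sum.not_neutral_contains_not_neutral by blast
  then show "i = j \<and> k = m \<or> i = m \<and> k = j" using z h by auto
qed


definition JA :: "nat \<Rightarrow> (nat \<times> nat \<times> nat \<times> nat) set" where
  "JA n = (\<lambda>(a,c). (a,c,1,2)) ` {(a,c). 3 \<le> a \<and> a < c \<and> c \<le> n}"
definition JB :: "nat \<Rightarrow> (nat \<times> nat \<times> nat \<times> nat) set" where
  "JB n = (\<lambda>v. (1,3,2,v)) ` {4..n}"
definition Jset :: "nat \<Rightarrow> (nat \<times> nat \<times> nat \<times> nat) set" where
  "Jset n = JA n \<union> JB n"
definition Yq :: "nat \<times> nat \<times> nat \<times> nat \<Rightarrow> tens" where
  "Yq J = (case J of (a,c,b,d) \<Rightarrow> Yt a c b d)"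

lemma JA_mem: "J \<in> JA n \<longleftrightarrow> (\<exists>a c. J = (a,c,1,2) \<and> 3 \<le> a \<and> a < c \<and> c \<le> n)"
  unfolding JA_def by auto
lemma JB_mem: "J \<in> JB n \<longleftrightarrow> (\<exists>v. J = (1,3,2,v) \<and> 4 \<le> v \<and> v \<le> n)"
  unfolding JB_def by auto

lemma finite_JA: "finite (JA n)"
proof -
  have "{(a,c). 3 \<le> a \<and> a < c \<and> c \<le> n} \<subseteq> {..n} \<times> {..n}" by auto
  then have "finite {(a,c). 3 \<le> a \<and> a < c \<and> c \<le> n}" by (rule finite_subset) simp
  then show ?thesis unfolding JA_def by simp
qed
lemma finite_JB: "finite (JB n)" unfolding JB_def by simp
lemma finite_Jset: "finite (Jset n)" unfolding Jset_def using finite_JA finite_JB by simp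
lemma JA_JB_disj: "JA n \<inter> JB n = {}" unfolding JA_def JB_def by auto

lemma Kp_Yq: "J \<in> Jset n \<Longrightarrow> Kp n (Yq J)"
  unfolding Jset_def Un_iff JA_mem JB_mem Yq_def
  by (elim disjE exE conjE) (simp_all add: Kp_Yt)

lemma zw_Yq: "zw n (Yq J)"
  unfolding Yq_def by (cases J) (simp add: zw_Yt)

lemma V1:
  assumes J: "J \<in> Jset n" and a0: "3 \<le> a0" "a0 < c0"
  shows "Yq J a0 a0 c0 c0 = (if J = (a0,c0,1,2) then 1 else 0)"
  using J unfolding Jset_def Un_iff JA_mem JB_mem Yq_def
  by (elim disjE exE conjE) (use a0 in \<open>auto simp: Yt_diag Ed_def dl_def\<close>)

lemma V2:
  assumes J: "J \<in> JB n" and v0: "4 \<le> v0"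
  shows "Yq J 1 1 v0 v0 = (if J = (1,3,2,v0) then -1 else 0)"
  using J unfolding JB_mem Yq_def
  by (elim exE conjE) (use v0 in \<open>auto simp: Yt_diag Ed_def dl_def\<close>)

lemma sum_box_split:
  assumes "3 \<le> (n::nat)"
  shows "(\<Sum>i\<in>{1..n}. f i) = f 1 + f 2 + f 3 + (\<Sum>i\<in>{4..n}. (f i :: complex))"
proof -
  have e: "{1..n} = insert 1 (insert 2 (insert 3 {4..n}))" using assms by auto
  show ?thesis unfolding e by (simp add: add.assoc)
qed

lemma rigid:
  assumes n: "n \<ge> 4" and K: "Kp n z" and Z: "zw n z"
    and A: "\<And>a c. 3 \<le> a \<Longrightarrow> a < c \<Longrightarrow> c \<le> n \<Longrightarrow> z a a c c = 0"
    and B: "\<And>v. 4 \<le> v \<Longrightarrow> v \<le> n \<Longrightarrow> z 1 1 v v = 0"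
    and h: "i \<in> {1..n}" "j \<in> {1..n}" "k \<in> {1..n}" "m \<in> {1..n}"
  shows "z i j k m = 0"
proof -
  have sym: "z k k i i = z i i k k" if "i \<in> {1..n}" "k \<in> {1..n}" for i k
    using KpD(1)[OF K that(1) that(2) that(2) that(1)] KpD(2)[OF K that(1) that(1) that(2) that(2)] by simp
  have dg: "z i i i i = 0" if "i \<in> {1..n}" for i
    using KpD(1)[OF K that that that that] by simp
  have tr: "(\<Sum>i\<in>{1..n}. z i i v v) = 0" if "v \<in> {1..n}" for v
    using KpD3[OF K that that] .
  have ge3: "z i i k k = 0" if "3 \<le> i" "3 \<le> k" "i \<le> n" "k \<le> n" for i k
  proof -
    consider "i < k" | "i = k" | "k < i" by linarith
    then show ?thesis
    proof cases
      case 1 then show ?thesis using A that by auto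
    next
      case 2 then show ?thesis using dg that by auto
    next
      case 3 then show ?thesis using A[of k i] sym[of i k] that by auto
    qed
  qed
  have s4: "(\<Sum>i\<in>{4..n}. f i) = 0" if "\<And>i. 4 \<le> i \<Longrightarrow> i \<le> n \<Longrightarrow> f i = (0::complex)" for f
    using that by (intro sum.neutral) auto
  have y1v: "z v v 1 1 = 0" "z 1 1 v v = 0" if "4 \<le> v" "v \<le> n" for v
    using B[OF that] sym[of 1 v] that by auto
  have y2v: "z 2 2 v v = 0" if v: "4 \<le> v" "v \<le> n" for v
  proof -
    have "0 = z 1 1 v v + z 2 2 v v + z 3 3 v v + (\<Sum>i\<in>{4..n}. z i i v v)"
      using tr[of v] v n sum_box_split[of n "\<lambda>i. z i i v v"] by simp
    also have "(\<Sum>i\<in>{4..n}. z i i v v) = 0" using v by (intro s4 ge3) auto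
    finally show ?thesis using v y1v ge3[of 3 v] by simp
  qed
  have eq3: "z 1 1 3 3 + z 2 2 3 3 = 0"
  proof -
    have "0 = z 1 1 3 3 + z 2 2 3 3 + z 3 3 3 3 + (\<Sum>i\<in>{4..n}. z i i 3 3)"
      using tr[of 3] n sum_box_split[of n "\<lambda>i. z i i 3 3"] by simp
    also have "(\<Sum>i\<in>{4..n}. z i i 3 3) = 0" by (intro s4 ge3) auto
    finally show ?thesis using ge3[of 3 3] n by simp
  qed
  have eq1: "z 2 2 1 1 + z 3 3 1 1 = 0"
  proof -
    have "0 = z 1 1 1 1 + z 2 2 1 1 + z 3 3 1 1 + (\<Sum>i\<in>{4..n}. z i i 1 1)"
      using tr[of 1] n sum_box_split[of n "\<lambda>i. z i i 1 1"] by simp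
    also have "(\<Sum>i\<in>{4..n}. z i i 1 1) = 0" by (intro s4 y1v(1))
    finally show ?thesis using dg[of 1] n by simp
  qed
  have eq2: "z 1 1 2 2 + z 3 3 2 2 = 0"
  proof -
    have "0 = z 1 1 2 2 + z 2 2 2 2 + z 3 3 2 2 + (\<Sum>i\<in>{4..n}. z i i 2 2)"
      using tr[of 2] n sum_box_split[of n "\<lambda>i. z i i 2 2"] by simp
    also have "(\<Sum>i\<in>{4..n}. z i i 2 2) = 0"
    proof (rule s4)
      fix i assume i: "4 \<le> i" "i \<le> n"
      have "z i i 2 2 = z 2 2 i i" using sym[of 2 i] i n by simp
      also have "\<dots> = 0" using y2v i by simp
      finally show "z i i 2 2 = 0" .
    qed
    finally show ?thesis using dg[of 2] n by simp
  qed
  have s12: "z 2 2 1 1 = z 1 1 2 2" and s13: "z 3 3 1 1 = z 1 1 3 3" and s23: "z 3 3 2 2 = z 2 2 3 3"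
    using sym[of 1 2] sym[of 1 3] sym[of 2 3] n by auto
  have e1: "z 1 1 2 2 + z 1 1 3 3 = 0" using eq1 s12 s13 by simp
  have e2: "z 1 1 2 2 + z 2 2 3 3 = 0" using eq2 s23 by simp
  have "2 * z 1 1 3 3 = (z 1 1 3 3 + z 2 2 3 3) + (z 1 1 2 2 + z 1 1 3 3) - (z 1 1 2 2 + z 2 2 3 3)"
    by (simp add: algebra_simps)
  also have "\<dots> = 0" using e1 e2 eq3 by simp
  finally have z13: "z 1 1 3 3 = 0" by simp
  have z12: "z 1 1 2 2 = 0" using e1 z13 by simp
  have z23: "z 2 2 3 3 = 0" using e2 z12 by simp
  have r1: "z 1 1 c c = 0" if "3 \<le> c" "c \<le> n" for c
    using that z13 y1v(2)[of c] by (cases "c = 3") auto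
  have r2: "z 2 2 c c = 0" if "3 \<le> c" "c \<le> n" for c
    using that z23 y2v[of c] by (cases "c = 3") auto
  have yall: "z a a c c = 0" if "a \<in> {1..n}" "c \<in> {1..n}" for a c
  proof -
    have an: "a \<le> n" "c \<le> n" using that by auto
    have ca: "a = 1 \<or> a = 2 \<or> 3 \<le> a" and cc: "c = 1 \<or> c = 2 \<or> 3 \<le> c" using that by auto
    consider "a = 1" | "a = 2" | "3 \<le> a" using ca by blast
    then show ?thesis
    proof cases
      case 1
      consider "c = 1" | "c = 2" | "3 \<le> c" using cc by blast
      then show ?thesis
      proof cases
        case 1 then show ?thesis using \<open>a = 1\<close> dg[of 1] n by simp
      next
        case 2 then show ?thesis using \<open>a = 1\<close> z12 by simp
      next
        case 3 then show ?thesis using \<open>a = 1\<close> r1[OF 3 an(2)] by simp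
      qed
    next
      case 2
      consider "c = 1" | "c = 2" | "3 \<le> c" using cc by blast
      then show ?thesis
      proof cases
        case 1 then show ?thesis using \<open>a = 2\<close> z12 s12 by simp
      next
        case 2 then show ?thesis using \<open>a = 2\<close> dg[of 2] n by simp
      next
        case 3 then show ?thesis using \<open>a = 2\<close> r2[OF 3 an(2)] by simp
      qed
    next
      case 3
      have sac: "z a a c c = z c c a a" using sym[of c a] that by simp
      consider "c = 1" | "c = 2" | "3 \<le> c" using cc by blast
      then show ?thesis
      proof cases
        case 1 then show ?thesis using sac r1[OF 3 an(1)] by simp
      next
        case 2 then show ?thesis using sac r2[OF 3 an(1)] by simp
      next
        case 3 then show ?thesis using ge3 \<open>3 \<le> a\<close> an by simp
      qed
    qed
  qed
  show ?thesis
  proof (rule ccontr)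
    assume nz: "z i j k m \<noteq> 0"
    then have "(i = j \<and> k = m) \<or> (i = m \<and> k = j)" using Z h unfolding zw_def by blast
    then show False
    proof
      assume "i = j \<and> k = m" then show False using nz yall[of i k] h by simp
    next
      assume e: "i = m \<and> k = j"
      have "z i k k i = - z i i k k" using KpD(2)[OF K h(1) h(1) h(3) h(3)] .
      then show False using nz yall[of i k] h e by simp
    qed
  qed
qed


lemma Jset_cases:
  assumes "J \<in> Jset n"
  obtains a c where "J = (a,c,1,2)" "3 \<le> a" "a < c" "c \<le> n" "J \<in> JA n"
  | v where "J = (1,3,2,v)" "4 \<le> v" "v \<le> n" "J \<in> JB n"
  using assms unfolding Jset_def Un_iff by (metis JA_mem JB_mem)

lemma JA_in_Jset: "3 \<le> a \<Longrightarrow> a < c \<Longrightarrow> c \<le> n \<Longrightarrow> (a,c,1,2) \<in> Jset n"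
  unfolding Jset_def Un_iff JA_mem by auto
lemma JB_in_Jset: "4 \<le> v \<Longrightarrow> v \<le> n \<Longrightarrow> (1,3,2,v) \<in> Jset n"
  unfolding Jset_def Un_iff JB_mem by auto
lemma JB_notin_JA: "(1,3,2,v) \<notin> JA n"
  unfolding JA_mem by auto

lemma sum_delta_gen:
  assumes "finite S" "J0 \<in> S"
  shows "(\<Sum>J\<in>S. c J * (if J = J0 then \<alpha> else 0)) = c J0 * (\<alpha>::complex)"
proof -
  have "(\<Sum>J\<in>S. c J * (if J = J0 then \<alpha> else 0)) = (\<Sum>J\<in>S. if J = J0 then c J0 * \<alpha> else 0)"
    by (rule sum.cong) auto
  also have "\<dots> = c J0 * \<alpha>" using assms by simp
  finally show ?thesis .
qed

lemma sum_Jset_delta: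
  "J0 \<in> Jset n \<Longrightarrow> (\<Sum>J\<in>Jset n. c J * (if J = J0 then \<alpha> else 0)) = c J0 * (\<alpha>::complex)"
  by (rule sum_delta_gen[OF finite_Jset])

lemma sum_Jset_split:
  "(\<Sum>J\<in>Jset n. f J) = (\<Sum>J\<in>JA n. f J) + (\<Sum>J\<in>JB n. (f J :: complex))"
  unfolding Jset_def using finite_JA finite_JB JA_JB_disj by (rule sum.union_disjoint)

lemma span_zw:
  assumes n: "n \<ge> 4" and K: "Kp n x" and Z: "zw n x"
  shows "\<exists>co. \<forall>i\<in>{1..n}. \<forall>j\<in>{1..n}. \<forall>k\<in>{1..n}. \<forall>m\<in>{1..n}. x i j k m = (\<Sum>J\<in>Jset n. co J * Yq J i j k m)"
proof -
  define cA where "cA J = (case J of (a,c,b,d) \<Rightarrow> x a a c c)" for J :: "nat \<times> nat \<times> nat \<times> nat"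
  define SA where "SA v = (\<Sum>J\<in>JA n. cA J * Yq J 1 1 v v)" for v
  define co where "co J = (if J \<in> JA n then cA J else (case J of (a,c,b,v) \<Rightarrow> SA v - x 1 1 v v))" for J
  define r where "r = (\<lambda>i j k m. x i j k m - (\<Sum>J\<in>Jset n. co J * Yq J i j k m))"
  have Kr: "Kp n r" unfolding r_def
    by (intro Kp_diff K Kp_sum finite_Jset Kp_Yq)
  have Zr: "zw n r" unfolding r_def
    by (intro zw_lin Z zw_sum finite_Jset zw_Yq)
  have rA: "r a a c c = 0" if ac: "3 \<le> a" "a < c" "c \<le> n" for a c
  proof -
    have "(\<Sum>J\<in>Jset n. co J * Yq J a a c c) = (\<Sum>J\<in>Jset n. co J * (if J = (a,c,1,2) then 1 else 0))"
      by (rule sum.cong[OF refl]) (simp add: V1 ac)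
    also have "\<dots> = co (a,c,1,2)" using sum_Jset_delta[OF JA_in_Jset[OF ac], of co 1] by simp
    also have "\<dots> = x a a c c" unfolding co_def cA_def using ac by (simp add: JA_mem)
    finally show ?thesis unfolding r_def by simp
  qed
  have rB: "r 1 1 v v = 0" if v: "4 \<le> v" "v \<le> n" for v
  proof -
    have "(\<Sum>J\<in>JA n. co J * Yq J 1 1 v v) = SA v"
      unfolding SA_def by (rule sum.cong[OF refl]) (simp add: co_def)
    moreover have "(\<Sum>J\<in>JB n. co J * Yq J 1 1 v v) = (\<Sum>J\<in>JB n. co J * (if J = (1,3,2,v) then -1 else 0))"
      by (rule sum.cong[OF refl]) (simp only: V2[OF _ v(1)])
    moreover have "(1,3,2,v) \<in> JB n" using v by (simp add: JB_mem)
    then have "(\<Sum>J\<in>JB n. co J * (if J = (1,3,2,v) then -1 else 0)) = - co (1,3,2,v)"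
      using sum_delta_gen[OF finite_JB, of "(1,3,2,v)" n co "-1"] by simp
    moreover have "co (1,3,2,v) = SA v - x 1 1 v v"
      unfolding co_def using JB_notin_JA by simp
    ultimately have "(\<Sum>J\<in>Jset n. co J * Yq J 1 1 v v) = x 1 1 v v"
      unfolding sum_Jset_split by simp
    then show ?thesis unfolding r_def by simp
  qed
  have "r i j k m = 0" if "i \<in> {1..n}" "j \<in> {1..n}" "k \<in> {1..n}" "m \<in> {1..n}" for i j k m
    using rigid[OF n Kr Zr rA rB that] .
  then show ?thesis unfolding r_def by (intro exI[of _ co]) auto
qed

lemma Kp_pq: "Kp n x \<Longrightarrow> p \<in> {1..n} \<Longrightarrow> q \<in> {1..n} \<Longrightarrow> x q p p q + x p q q p = -2 * x p p q q"
proof -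
  assume K: "Kp n x" and p: "p \<in> {1..n}" and q: "q \<in> {1..n}"
  have 1: "x p q q p = - x p p q q" using KpD(2)[OF K p p q q] .
  have 2: "x q p p q = - x q q p p" using KpD(2)[OF K q q p p] .
  have 3: "x q q p p = - x p q q p" using KpD(1)[OF K p q q p] .
  show ?thesis using 1 2 3 by simp
qed

lemma indep:
  assumes n: "n \<ge> 4" and I: "(\<lambda>w. \<Sum>J\<in>Jset n. c J * Phi n (Yq J) w) \<in> U_ideal n"
  shows "\<forall>J\<in>Jset n. c J = 0"
proof -
  define X where "X = (\<lambda>i j k m. \<Sum>J\<in>Jset n. c J * Yq J i j k m)"
  have KX: "Kp n X" unfolding X_def by (intro Kp_sum finite_Jset Kp_Yq)
  have PX: "Phi n X = (\<lambda>w. \<Sum>J\<in>Jset n. c J * Phi n (Yq J) w)" unfolding X_def by (rule Phi_sum)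
  have X0: "X p p q q = 0" if pq: "p \<in> {1..n}" "q \<in> {1..n}" "p \<noteq> q" for p q
  proof -
    have "act_f n (Phi n X) (unitm p q) q p = 0" using I_act0[OF I] unfolding PX by blast
    then have "X q p p q + X p q q p = 0" using L_Phi[OF pq] by simp
    then show ?thesis using Kp_pq[OF KX pq(1,2)] by simp
  qed
  have cA: "c J = 0" if J: "J \<in> JA n" for J
  proof -
    obtain a b where J': "J = (a,b,1,2)" "3 \<le> a" "a < b" "b \<le> n" using J unfolding JA_mem by blast
    have "X a a b b = (\<Sum>J\<in>Jset n. c J * (if J = (a,b,1,2) then 1 else 0))"
      unfolding X_def by (rule sum.cong[OF refl]) (simp add: V1 J')
    also have "\<dots> = c J" using sum_Jset_delta[OF JA_in_Jset[OF J'(2-4)], of c 1] J'(1) by simp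
    finally show ?thesis using X0[of a b] J' by simp
  qed
  have cB: "c J = 0" if J: "J \<in> JB n" for J
  proof -
    obtain v where J': "J = (1,3,2,v)" "4 \<le> v" "v \<le> n" using J unfolding JB_mem by blast
    have "X 1 1 v v = (\<Sum>J\<in>JA n. c J * Yq J 1 1 v v) + (\<Sum>J\<in>JB n. c J * Yq J 1 1 v v)"
      unfolding X_def sum_Jset_split ..
    also have "(\<Sum>J\<in>JA n. c J * Yq J 1 1 v v) = 0" by (simp add: cA)
    also have "(\<Sum>J\<in>JB n. c J * Yq J 1 1 v v) = (\<Sum>J\<in>JB n. c J * (if J = (1,3,2,v) then -1 else 0))"
      by (rule sum.cong[OF refl]) (simp only: V2[OF _ J'(2)])
    also have "\<dots> = - c (1,3,2,v)" using sum_delta_gen[OF finite_JB, of "(1,3,2,v)" n c "-1"] J J'(1) by simp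
    finally show ?thesis using X0[of 1 v] J' by simp
  qed
  show ?thesis using cA cB unfolding Jset_def by blast
qed


section \<open>The generator v and the base tensor\<close>

lemma dl_sym: "dl i a = dl a i" by (simp add: dl_def)

lemma mt_expand: "mt a c b d i j k m = dl a i * dl b j * dl c k * dl d m - dl a i * dl d j * dl c k * dl b m
   - dl c i * dl b j * dl a k * dl d m + dl c i * dl d j * dl a k * dl b m"
  by (simp add: mt_def r2_def dl_sym algebra_simps)

lemma Phi_mt:
  assumes "a \<in> {1..n}" "b \<in> {1..n}" "c \<in> {1..n}" "d \<in> {1..n}"
  shows "Phi n (mt a c b d) = (\<lambda>w. gw [eh n a b, eh n c d] w - gw [eh n a d, eh n c b] w
      - gw [eh n c b, eh n a d] w + gw [eh n c d, eh n a b] w)"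
proof (rule ext)
  fix w
  let ?G = "\<lambda>i j k m. gw [eh n i j, eh n k m] w"
  have "Phi n (mt a c b d) w = (\<Sum>i\<in>{1..n}. \<Sum>j\<in>{1..n}. \<Sum>k\<in>{1..n}. \<Sum>m\<in>{1..n}.
      ?G i j k m * (dl a i * dl b j * dl c k * dl d m) - ?G i j k m * (dl a i * dl d j * dl c k * dl b m)
    - ?G i j k m * (dl c i * dl b j * dl a k * dl d m) + ?G i j k m * (dl c i * dl d j * dl a k * dl b m))"
    unfolding Phi_def mt_expand by (simp add: algebra_simps)
  also have "\<dots> = ?G a b c d - ?G a d c b - ?G c b a d + ?G c d a b"
    unfolding sum.distrib sum_subtractf
      sum4_delta[OF assms(1) assms(2) assms(3) assms(4)] sum4_delta[OF assms(1) assms(4) assms(3) assms(2)]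
      sum4_delta[OF assms(3) assms(2) assms(1) assms(4)] sum4_delta[OF assms(3) assms(4) assms(1) assms(2)] ..
  finally show "Phi n (mt a c b d) w = gw [eh n a b, eh n c d] w - gw [eh n a d, eh n c b] w
      - gw [eh n c b, eh n a d] w + gw [eh n c d, eh n a b] w" .
qed

lemma mbr_unitm_zero:
  assumes "b \<noteq> c" "d \<noteq> a"
  shows "mbr n (unitm a b) (unitm c d) = (\<lambda>x y. 0)"
  using assms by (intro ext) (simp add: mbr_def mmul_def unitm_alt sum.neutral)

lemma comm_gw:
  assumes "A \<in> sl n" "B \<in> sl n" "mbr n A B = (\<lambda>x y. 0)"
  shows "eqv n (gw [A,B]) (gw [B,A])"
proof -
  have "eqv n (\<lambda>w. gw [A,B] w - gw [B,A] w) (\<lambda>w. 0)"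
    using eqv_trans[OF br_eqv[OF assms(1,2), unfolded assms(3)] gen_zero[of n]] .
  then show ?thesis unfolding eqv_def by simp
qed

lemma neg1_sq: "(-1::complex)^a * (-1)^a = 1"
  by (simp add: power_mult_distrib[symmetric])

lemma root_e_sl: "i \<in> {1..n} \<Longrightarrow> j \<in> {1..n} \<Longrightarrow> i \<noteq> j \<Longrightarrow> root_e i j \<in> sl n"
  using sl_lin[OF unitm_sl unitm_sl, of i n j i j "(-1)^(j-i-1)" 0] unfolding root_e_def by simp

lemma gen_root: "i \<in> {1..n} \<Longrightarrow> j \<in> {1..n} \<Longrightarrow> i \<noteq> j \<Longrightarrow>
  eqv n (fa_gen (root_e i j)) (\<lambda>w. (-1)^(j-i-1) * fa_gen (unitm i j) w)"
  unfolding root_e_def by (rule gen_smult) (rule unitm_sl)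

lemma gen_prod:
  assumes "eqv n (fa_gen A) (\<lambda>w. s * fa_gen A' w)" "eqv n (fa_gen B) (\<lambda>w. t * fa_gen B' w)"
    "B \<in> sl n" "A' \<in> sl n"
  shows "eqv n (fa_mult (fa_gen A) (fa_gen B)) (\<lambda>w. (s * t) * gw [A', B'] w)"
proof -
  have 1: "eqv n (fa_mult (fa_gen A) (fa_gen B)) (fa_mult (\<lambda>w. s * fa_gen A' w) (fa_gen B))"
    by (rule eqv_mult_right[OF assms(1) fa_gen_carrier[OF assms(3)]])
  have 2: "eqv n (fa_mult (fa_gen A') (fa_gen B)) (fa_mult (fa_gen A') (\<lambda>w. t * fa_gen B' w))"
    by (rule eqv_mult_left[OF assms(2) fa_gen_carrier[OF assms(4)]])
  have 3: "eqv n (\<lambda>w. s * fa_mult (fa_gen A') (fa_gen B) w) (\<lambda>w. s * (t * gw [A', B'] w))"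
    using eqv_smult[OF 2, of s] unfolding fa_mult_smult_right fa_gen_gw fa_mult_gw by simp
  show ?thesis using eqv_trans[OF 1[unfolded fa_mult_smult_left] 3] by (simp add: mult.assoc)
qed

lemma v_eqv:
  assumes l: "l \<ge> 3"
  shows "eqv (l+1) (vprime l) (\<lambda>w. gw [unitm 1 (l+1), unitm 2 l] w - gw [unitm 2 (l+1), unitm 1 l] w)"
proof -
  let ?n = "l+1"
  have s1: "(-1::complex)^(l+1-1-1) * (-1)^(l-2-1) = 1"
  proof -
    have "l + 1 - 1 - 1 = (l - 2 - 1) + 2" using l by arith
    then show ?thesis by (simp only: power_add neg1_sq[of "l-2-1"]) (simp add: mult_ac neg1_sq)
  qed
  have s2: "(-1::complex)^(l+1-2-1) * (-1)^(l-1-1) = 1"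
  proof -
    have "l + 1 - 2 - 1 = l - 1 - 1" using l by arith
    then show ?thesis by (simp add: neg1_sq)
  qed
  have b: "1 \<in> {1..?n}" "2 \<in> {1..?n}" "l \<in> {1..?n}" "?n \<in> {1..?n}" using l by auto
  have e1: "eqv ?n (fa_mult (fa_gen (root_e 1 ?n)) (fa_gen (root_e 2 l)))
     (\<lambda>w. ((-1)^(l+1-1-1) * (-1)^(l-2-1)) * gw [unitm 1 ?n, unitm 2 l] w)"
    using l b by (intro gen_prod gen_root unitm_sl root_e_sl) auto
  have e2: "eqv ?n (fa_mult (fa_gen (root_e 2 ?n)) (fa_gen (root_e 1 l)))
     (\<lambda>w. ((-1)^(l+1-2-1) * (-1)^(l-1-1)) * gw [unitm 2 ?n, unitm 1 l] w)"
    using l b by (intro gen_prod gen_root unitm_sl root_e_sl) auto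
  show ?thesis using eqv_diff[OF e1 e2] unfolding s1 s2 vprime_def by simp
qed

lemma Kp_mt_disj:
  assumes "a \<noteq> b" "a \<noteq> d" "c \<noteq> b" "c \<noteq> d"
  shows "Kp n (mt a c b d)"
proof (rule KpI)
  fix i j k m
  show "mt a c b d k j i m = - mt a c b d i j k m" by (rule mt_a13)
  show "mt a c b d i m k j = - mt a c b d i j k m" by (rule mt_a24)
next
  fix k m
  have "mt a c b d i i k m = 0" for i
    using assms by (simp add: mt_def r2_def dl_def)
  then show "(\<Sum>i\<in>{1..n}. mt a c b d i i k m) = 0" by simp
qed

lemma base:
  assumes l: "l \<ge> 3"
  shows "Kin (l+1) (vprime l) (mt 1 2 (l+1) l)"
    "Kp (l+1) (\<lambda>i j k m. (1/2) * mt 1 2 (l+1) l i j k m)"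
    "eqv (l+1) (vprime l) (Phi (l+1) (\<lambda>i j k m. (1/2) * mt 1 2 (l+1) l i j k m))"
proof -
  let ?n = "l+1"
  let ?P = "gw [unitm 1 ?n, unitm 2 l]" and ?Q = "gw [unitm 2 ?n, unitm 1 l]"
  have b: "1 \<in> {1..?n}" "2 \<in> {1..?n}" "l \<in> {1..?n}" "?n \<in> {1..?n}" using l by auto
  have Pm: "Phi ?n (mt 1 2 ?n l) = (\<lambda>w. ?P w - gw [unitm 1 l, unitm 2 ?n] w - ?Q w + gw [unitm 2 l, unitm 1 ?n] w)"
    unfolding Phi_mt[OF b(1) b(4) b(2) b(3)] using l by (simp add: eh_offdiag)
  have c1: "eqv ?n (gw [unitm 1 l, unitm 2 ?n]) ?Q"
    using l b by (intro comm_gw unitm_sl mbr_unitm_zero) auto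
  have c2: "eqv ?n (gw [unitm 2 l, unitm 1 ?n]) ?P"
    using l b by (intro comm_gw unitm_sl mbr_unitm_zero) auto
  have m1: "eqv ?n (Phi ?n (mt 1 2 ?n l)) (\<lambda>w. ?P w - ?Q w - ?Q w + ?P w)"
    unfolding Pm by (intro eqv_add eqv_diff eqv_refl c1 c2)
  have m2: "(\<lambda>w. ?P w - ?Q w - ?Q w + ?P w) = (\<lambda>w. 2 * (?P w - ?Q w))" by (rule ext) simp
  have m3: "eqv ?n (\<lambda>w. 2 * (?P w - ?Q w)) (\<lambda>w. 2 * vprime l w)"
    by (rule eqv_smult) (rule eqv_sym[OF v_eqv[OF l]])
  have main: "eqv ?n (Phi ?n (mt 1 2 ?n l)) (\<lambda>w. 2 * vprime l w)"
    using eqv_trans[OF m1[unfolded m2] m3] .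
  have "(\<lambda>w. (Phi ?n (mt 1 2 ?n l) w - 2 * vprime l w) + 2 * vprime l w) \<in> R_pre ?n (vprime l)"
    using main unfolding eqv_def by (intro R_pre.add R_pre.ideal R_pre.smult R_pre.base)
  then show "Kin ?n (vprime l) (mt 1 2 ?n l)" unfolding Kin_def by simp
  show "Kp ?n (\<lambda>i j k m. (1/2) * mt 1 2 ?n l i j k m)"
    using l by (intro Kp_smult Kp_mt_disj) auto
  have "eqv ?n (\<lambda>w. (1/2) * Phi ?n (mt 1 2 ?n l) w) (\<lambda>w. (1/2) * (2 * vprime l w))"
    using main by (rule eqv_smult)
  then show "eqv ?n (vprime l) (Phi ?n (\<lambda>i j k m. (1/2) * mt 1 2 ?n l i j k m))"
    unfolding Phi_smult by (simp add: eqv_sym)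
qed


lemma Kin_Yq:
  assumes l: "l \<ge> 3" and J: "J \<in> Jset (l+1)"
  shows "Kin (l+1) (vprime l) (Yq J)"
proof -
  let ?n = "l+1" and ?v = "vprime l"
  have n1: "1 \<le> ?n" by simp
  have K0: "Kin ?n ?v (mt 1 2 ?n l)" using base(1)[OF l] .
  from J show ?thesis
  proof (cases rule: Jset_cases)
    case (1 a c)
    have K1a: "Kin ?n ?v (mt 2 1 ?n l)" using Kin_neg_r[OF n1 K0] .
    have K1b: "Kin ?n ?v (mt 2 ?n 1 l)" by (rule Kin_swap[OF n1 K1a]) (use l in auto)
    have K1: "Kin ?n ?v (mt ?n 2 1 l)" using Kin_neg_r[OF n1 K1b] .
    have K2a: "Kin ?n ?v (mt ?n 2 l 1)" using Kin_neg_c[OF n1 K1] .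
    have K2b: "Kin ?n ?v (mt ?n l 2 1)" by (rule Kin_swap[OF n1 K2a]) (use l in auto)
    have K2: "Kin ?n ?v (mt ?n l 1 2)" using Kin_neg_c[OF n1 K2b] .
    have KA: "Kin ?n ?v (mt a c 1 2)"
    proof (cases "c = ?n")
      case True
      have K2': "Kin ?n ?v (mt l ?n 1 2)" using Kin_neg_r[OF n1 K2] .
      show ?thesis
      proof (cases "a = l")
        case True then show ?thesis using K2' \<open>c = ?n\<close> by simp
      next
        case False
        have "Kin ?n ?v (mt a ?n 1 2)" by (rule Kin_relabel_r[OF n1 K2']) (use l 1 False in auto)
        then show ?thesis using \<open>c = ?n\<close> by simp
      qed
    next
      case False
      have K3: "Kin ?n ?v (mt a l 1 2)" by (rule Kin_relabel_r[OF n1 K2]) (use l 1 False in auto)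
      show ?thesis
      proof (cases "c = l")
        case True then show ?thesis using K3 by simp
      next
        case False
        have c: "c < l" using False \<open>c \<noteq> ?n\<close> 1 by auto
        have K4: "Kin ?n ?v (mt l a 1 2)" using Kin_neg_r[OF n1 K3] .
        have K5: "Kin ?n ?v (mt c a 1 2)" by (rule Kin_relabel_r[OF n1 K4]) (use l 1 c in auto)
        show ?thesis using Kin_neg_r[OF n1 K5] .
      qed
    qed
    have "Kin ?n ?v (Yt a c 1 2)" by (rule Kin_cycle[OF n1 KA]) (use 1 in auto)
    then show ?thesis using 1 by (simp add: Yq_def)
  next
    case (2 w)
    have K3: "Kin ?n ?v (mt 1 ?n 2 l)" by (rule Kin_swap[OF n1 K0]) (use l in auto)
    have KB: "Kin ?n ?v (mt 1 3 2 w)"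
    proof (cases "l = 3")
      case True
      have a: "Kin ?n ?v (mt 1 ?n l 2)" using Kin_neg_c[OF n1 K3] .
      have b: "Kin ?n ?v (mt 1 l ?n 2)" by (rule Kin_swap[OF n1 a]) (use l in auto)
      have c: "Kin ?n ?v (mt 1 l 2 ?n)" using Kin_neg_c[OF n1 b] .
      have "w = ?n" using 2 True by auto
      then show ?thesis using c True by simp
    next
      case False
      have a: "Kin ?n ?v (mt ?n 1 2 l)" using Kin_neg_r[OF n1 K3] .
      have b: "Kin ?n ?v (mt 3 1 2 l)" by (rule Kin_relabel_r[OF n1 a]) (use l False in auto)
      have c: "Kin ?n ?v (mt 1 3 2 l)" using Kin_neg_r[OF n1 b] .
      show ?thesis
      proof (cases "w = l")
        case True then show ?thesis using c by simp
      next
        case False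
        have d: "Kin ?n ?v (mt 1 3 l 2)" using Kin_neg_c[OF n1 c] .
        have e: "Kin ?n ?v (mt 1 3 w 2)" by (rule Kin_relabel_c[OF n1 d]) (use l 2 False in auto)
        show ?thesis using Kin_neg_c[OF n1 e] .
      qed
    qed
    have "Kin ?n ?v (Yt 1 3 2 w)" by (rule Kin_cycle[OF n1 KB]) (use 2 in auto)
    then show ?thesis using 2 by (simp add: Yq_def)
  qed
qed

lemma zw_ad:
  assumes n: "n \<ge> 1" and H: "H \<in> cartan n" and Z: "zw n x"
  shows "ad H (Phi n x) \<in> U_ideal n"
proof -
  have Hs: "H \<in> sl n" using H by (simp add: cartan_def)
  have "Phi n (act_t n H x) = (\<lambda>w. 0)"
  proof (rule Phi_zero)
    fix i j k m assume h: "i \<in> {1..n}" "j \<in> {1..n}" "k \<in> {1..n}" "m \<in> {1..n}"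
    show "act_t n H x i j k m = 0"
    proof (cases "x i j k m = 0")
      case True then show ?thesis by (simp add: act_diag[OF H h])
    next
      case False
      then have "(i = j \<and> k = m) \<or> (i = m \<and> k = j)" using Z h unfolding zw_def by blast
      then show ?thesis by (auto simp: act_diag[OF H h])
    qed
  qed
  then have "eqv n (ad H (Phi n x)) (\<lambda>w. 0)" using ad_Phi[OF n Hs, of x] by simp
  then show ?thesis unfolding eqv_def by simp
qed

lemma card_P: "2 * card {(a,c). 3 \<le> a \<and> a < c \<and> c \<le> (n::nat)} = (n-2)*(n-3)"
proof (induction n)
  case 0
  have e0: "{(a,c). 3 \<le> a \<and> a < c \<and> c \<le> (0::nat)} = {}" by auto
  show ?case unfolding e0 by simp
next
  case (Suc n)
  have e: "{(a,c). 3 \<le> a \<and> a < c \<and> c \<le> Suc n} = {(a,c). 3 \<le> a \<and> a < c \<and> c \<le> n} \<union> (\<lambda>a. (a, Suc n)) ` {3..n}"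
    by auto
  have fin: "finite {(a,c). 3 \<le> a \<and> a < c \<and> c \<le> (n::nat)}"
    by (rule finite_subset[of _ "{..n} \<times> {..n}"]) auto
  have d: "{(a,c). 3 \<le> a \<and> a < c \<and> c \<le> n} \<inter> (\<lambda>a. (a, Suc n)) ` {3..n} = {}" by auto
  have ci: "card ((\<lambda>a. (a, Suc n)) ` {3..n}) = n - 2"
    by (subst card_image) (auto simp: inj_on_def)
  have "2 * card {(a,c). 3 \<le> a \<and> a < c \<and> c \<le> Suc n} = (n-2)*(n-3) + 2 * (n-2)"
    unfolding e using card_Un_disjoint[OF fin _ d] ci Suc by simp
  also have "\<dots> = (Suc n - 2) * (Suc n - 3)"
  proof (cases "n \<ge> 3")
    case True
    then obtain k where "n = k + 3" by (metis add.commute le_iff_add)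
    then show ?thesis by (simp add: algebra_simps)
  next
    case False
    then show ?thesis by (cases n) (auto simp: numeral_eq_Suc)
  qed
  finally show ?case .
qed

lemma card_JA: "2 * card (JA n) = (n-2)*(n-3)"
proof -
  have "card (JA n) = card {(a,c). 3 \<le> a \<and> a < c \<and> c \<le> n}"
    unfolding JA_def by (rule card_image) (auto simp: inj_on_def)
  then show ?thesis using card_P by simp
qed

lemma card_JB: "card (JB n) = n - 3"
  unfolding JB_def by (subst card_image) (auto simp: inj_on_def)

lemma card_Jset: "card (Jset n) = card (JA n) + card (JB n)"
  unfolding Jset_def using finite_JA finite_JB JA_JB_disj by (rule card_Un_disjoint)

lemma inj_F:
  assumes n: "n \<ge> 4"
  shows "inj_on (\<lambda>J. Phi n (Yq J)) (Jset n)"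
proof (rule inj_onI, rule ccontr)
  fix J1 J2 assume J1: "J1 \<in> Jset n" and J2: "J2 \<in> Jset n" and eq: "Phi n (Yq J1) = Phi n (Yq J2)" and ne: "J1 \<noteq> J2"
  define c where "c J = (if J = J1 then 1 else 0) + (if J = J2 then -1 else (0::complex))" for J
  have "(\<lambda>w. \<Sum>J\<in>Jset n. c J * Phi n (Yq J) w) = (\<lambda>w. Phi n (Yq J1) w - Phi n (Yq J2) w)"
  proof (rule ext)
    fix w
    have "(\<Sum>J\<in>Jset n. c J * Phi n (Yq J) w) = (\<Sum>J\<in>Jset n. (if J = J1 then Phi n (Yq J1) w else 0))
        + (\<Sum>J\<in>Jset n. (if J = J2 then - Phi n (Yq J2) w else 0))"
      unfolding sum.distrib[symmetric] by (rule sum.cong) (auto simp: c_def)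
    also have "\<dots> = Phi n (Yq J1) w - Phi n (Yq J2) w" using J1 J2 finite_Jset by simp
    finally show "(\<Sum>J\<in>Jset n. c J * Phi n (Yq J) w) = Phi n (Yq J1) w - Phi n (Yq J2) w" .
  qed
  also have "\<dots> = (\<lambda>w. 0)" using eq by simp
  finally have "(\<lambda>w. \<Sum>J\<in>Jset n. c J * Phi n (Yq J) w) \<in> U_ideal n" by (simp add: U_ideal.zero)
  then have "c J1 = 0" using indep[OF n] J1 by blast
  then show False using ne by (simp add: c_def)
qed

theorem lemma5p2:
  fixes l :: nat
  assumes "l \<ge> 3"
  shows "quot_dim (U_ideal (l+1)) (R0_pre (l+1) (vprime l)) ((l - 2) * (l + 1) div 2)"
proof -
  let ?n = "l+1" and ?v = "vprime l"
  have l: "l \<ge> 3" using assms .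
  have n4: "?n \<ge> 4" and n1: "?n \<ge> 1" using l by auto
  define F where "F J = Phi ?n (Yq J)" for J
  define B where "B = F ` Jset ?n"
  have injF: "inj_on F (Jset ?n)" unfolding F_def by (rule inj_F[OF n4])
  have finB: "finite B" unfolding B_def using finite_Jset by simp
  have cardB: "card B = (l - 2) * (l + 1) div 2"
  proof -
    have "card B = card (Jset ?n)" unfolding B_def using injF by (rule card_image)
    moreover have "2 * card (Jset ?n) = (l - 2) * (l + 1)"
    proof -
      have "2 * card (Jset ?n) = (?n - 2) * (?n - 3) + 2 * (?n - 3)"
        unfolding card_Jset using card_JA[of ?n] card_JB[of ?n] by simp
      also have "\<dots> = (l - 2) * (l + 1)"
      proof -
        obtain k where "l = k + 3" using l by (metis add.commute le_iff_add)
        then show ?thesis by (simp add: algebra_simps)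
      qed
      finally show ?thesis .
    qed
    ultimately show ?thesis by simp
  qed
  have BR: "B \<subseteq> R0_pre ?n ?v"
  proof
    fix b assume "b \<in> B"
    then obtain J where J: "J \<in> Jset ?n" and b: "b = F J" unfolding B_def by blast
    have "b \<in> R_pre ?n ?v" using Kin_Yq[OF l J] unfolding b F_def Kin_def .
    moreover have "\<forall>H\<in>cartan ?n. ad H b \<in> U_ideal ?n"
      unfolding b F_def using zw_ad[OF n1 _ zw_Yq[of ?n J]] by blast
    ultimately show "b \<in> R0_pre ?n ?v" by (simp add: R0_pre_def)
  qed
  have reidx: "(\<Sum>b\<in>B. c b * b w) = (\<Sum>J\<in>Jset ?n. c (F J) * F J w)" for c w
    unfolding B_def using injF by (rule sum.reindex_cong) auto
  have indB: "\<forall>c. (\<lambda>w. \<Sum>b\<in>B. c b * b w) \<in> U_ideal ?n \<longrightarrow> (\<forall>b\<in>B. c b = 0)"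
  proof (intro allI impI ballI)
    fix c b assume I: "(\<lambda>w. \<Sum>b\<in>B. c b * b w) \<in> U_ideal ?n" and bB: "b \<in> B"
    have "(\<lambda>w. \<Sum>J\<in>Jset ?n. (c \<circ> F) J * Phi ?n (Yq J) w) \<in> U_ideal ?n"
      using I unfolding reidx by (simp add: F_def)
    then have "\<forall>J\<in>Jset ?n. (c \<circ> F) J = 0" by (rule indep[OF n4])
    then show "c b = 0" using bB unfolding B_def by auto
  qed
  have spanB: "\<forall>f\<in>R0_pre ?n ?v. \<exists>c. (\<lambda>w. f w - (\<Sum>b\<in>B. c b * b w)) \<in> U_ideal ?n"
  proof
    fix f assume f: "f \<in> R0_pre ?n ?v"
    obtain x where K: "Kp ?n x" and Z: "zw ?n x" and fx: "eqv ?n f (Phi ?n x)"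
      using R0_reduce[OF n1 base(2)[OF l] base(3)[OF l] f] by blast
    obtain co where co: "\<forall>i\<in>{1..?n}. \<forall>j\<in>{1..?n}. \<forall>k\<in>{1..?n}. \<forall>m\<in>{1..?n}. x i j k m = (\<Sum>J\<in>Jset ?n. co J * Yq J i j k m)"
      using span_zw[OF n4 K Z] by blast
    have "Phi ?n x = Phi ?n (\<lambda>i j k m. \<Sum>J\<in>Jset ?n. co J * Yq J i j k m)"
      by (rule Phi_cong) (use co in auto)
    also have "\<dots> = (\<lambda>w. \<Sum>J\<in>Jset ?n. co J * F J w)" unfolding Phi_sum F_def ..
    finally have Px: "Phi ?n x = (\<lambda>w. \<Sum>J\<in>Jset ?n. co J * F J w)" .
    define c where "c b = co (the_inv_into (Jset ?n) F b)" for b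
    have "(\<Sum>b\<in>B. c b * b w) = (\<Sum>J\<in>Jset ?n. co J * F J w)" for w
      unfolding reidx c_def using injF by (intro sum.cong refl) (simp add: the_inv_into_f_f)
    then have eqc: "(\<lambda>w. f w - (\<Sum>b\<in>B. c b * b w)) = (\<lambda>w. f w - Phi ?n x w)" unfolding Px by simp
    show "\<exists>c. (\<lambda>w. f w - (\<Sum>b\<in>B. c b * b w)) \<in> U_ideal ?n"
    proof (rule exI[of _ c])
      show "(\<lambda>w. f w - (\<Sum>b\<in>B. c b * b w)) \<in> U_ideal ?n" unfolding eqc using fx unfolding eqv_def .
    qed
  qed
  show ?thesis unfolding quot_dim_def
    by (intro exI[of _ B] conjI finB cardB BR indB spanB)
qed


end
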